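(* Let $N\in\mathbb N$, $\alpha,\beta>-1$, $\mu\in(0,1)$, let $\{x_j,\omega_j\}_{j=0}^N$ be the JGL nodes and weights, and let $\hat Q_0^\mu,\dots,\hat Q_N^\mu\in\mathcal P_N$ be defined by $$ {}^R\hat D_-^\mu\hat Q_0^\mu(x_i)=0\ (1\le i\le N),\ \ \hat Q_0^\mu(-1)=1;\qquad {}^R\hat D_-^\mu\hat Q_j^\mu(x_i)=\delta_{ij}\ (1\le i\le N),\ \ \hat Q_j^\mu(-1)=0\ (1\le j\le N). $$ Then for $0\le j\le N$, $$ \hat Q_j^\mu(x)=\zeta_j\sum_{l=0}^N\frac{\Gamma(l-\mu+1)}{l!}\,\hat t_{lj}\,P_l(x),\qquad \hat t_{lj}=\sum_{n=l}^N{}^{(\alpha,\beta)}C^{(\mu,-\mu)}_{ln}\,t_{nj},\qquad t_{nj}=\frac{\omega_j}{\tilde\gamma_n^{(\alpha,\beta)}}P_n^{(\alpha,\beta)}(x_j), $$ where $\zeta_0=1/\Gamma(1-\mu)$ and $\zeta_j=1$ for $1\le j\le N$.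
   Context: For $\rho>0$, $(I_-^\rho u)(x)=\frac{1}{\Gamma(\rho)}\int_{-1}^x (x-y)^{\rho-1}u(y)\,dy$; for $\mu\in(0,1)$, ${}^R D_-^\mu u=\frac{d}{dx}(I_-^{1-\mu}u)$ and ${}^R\hat D_-^\mu u=(1+x)^\mu\,{}^R D_-^\mu u$ (a polynomial when $u$ is a polynomial). Jacobi polynomials are in Szegő's normalization: $P_n^{(\alpha,\beta)}(x)=\frac{\Gamma(n+\alpha+1)}{n!\Gamma(\alpha+1)}\,{}_2F_1\big(-n,n+\alpha+\beta+1;\alpha+1;\tfrac{1-x}{2}\big)$, $P_0^{(\alpha,\beta)}=1$, $P_n=P_n^{(0,0)}$. For $\alpha,\beta>-1$, $\gamma_n^{(\alpha,\beta)}=\frac{2^{\alpha+\beta+1}\Gamma(n+\alpha+1)\Gamma(n+\beta+1)}{(2n+\alpha+\beta+1)\,n!\,\Gamma(n+\alpha+\beta+1)}$; $\tilde\gamma_n^{(\alpha,\beta)}=\gamma_n^{(\alpha,\beta)}$ for $n\le N-1$ and $\tilde\gamma_N^{(\alpha,\beta)}=\big(2+\frac{\alpha+\beta+1}{N}\big)\gamma_N^{(\alpha,\beta)}$. Connection coefficients: for $\alpha,\beta,a,b>-1$, ${}^{(\alpha,\beta)}C^{(a,b)}_{ln}$ are the unique numbers with $P_n^{(\alpha,\beta)}=\sum_{l=0}^n {}^{(\alpha,\beta)}C^{(a,b)}_{ln}P_l^{(a,b)}$. JGL nodes $x_0<\dots<x_N$ are the zeros of $(1-x^2)\frac{d}{dx}P_N^{(\alpha,\beta)}$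 ($x_0=-1$, $x_N=1$) and the weights $\omega_j$ make $\int_{-1}^1\phi(1-x)^\alpha(1+x)^\beta dx=\sum_j\phi(x_j)\omega_j$ exact for $\phi\in\mathcal P_{2N-1}$. *)

theory Defs
  imports "HOL-Analysis.Analysis" "HOL-Computational_Algebra.Polynomial"
begin

definition rl_int :: "real \<Rightarrow> (real \<Rightarrow> real) \<Rightarrow> real \<Rightarrow> real" where
  "rl_int \<rho> u x = (1 / Gamma \<rho>) * integral {-1..x} (\<lambda>y. (x - y) powr (\<rho> - 1) * u y)"

definition rl_deriv :: "real \<Rightarrow> (real \<Rightarrow> real) \<Rightarrow> real \<Rightarrow> real" where
  "rl_deriv \<mu> u x = deriv (\<lambda>t. rl_int (1 - \<mu>) u t) x"

definition rl_hat_deriv :: "real \<Rightarrow> (real \<Rightarrow> real) \<Rightarrow> real \<Rightarrow> real" where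
  "rl_hat_deriv \<mu> u x = (1 + x) powr \<mu> * rl_deriv \<mu> u x"

(* Jacobi polynomial, Szego normalization, via the terminating 2F1 *)
definition jacobi_poly :: "real \<Rightarrow> real \<Rightarrow> nat \<Rightarrow> real poly" where
  "jacobi_poly a b n =
     smult (Gamma (real n + a + 1) / (fact n * Gamma (a + 1)))
       (\<Sum>k\<le>n. smult (pochhammer (- real n) k * pochhammer (real n + a + b + 1) k
                       / (pochhammer (a + 1) k * fact k))
                  ([:1/2, -1/2:] ^ k))"

(* gamma_n^{(a,b)}; for n = 0 the factor (2n+a+b+1) Gamma(n+a+b+1) is read as Gamma(a+b+2) *)
definition jacobi_gamma :: "real \<Rightarrow> real \<Rightarrow> nat \<Rightarrow> real" where
  "jacobi_gamma a b n =
     (if n = 0 then 2 powr (a + b + 1) * Gamma (a + 1) * Gamma (b + 1) / Gamma (a + b + 2)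
      else 2 powr (a + b + 1) * Gamma (real n + a + 1) * Gamma (real n + b + 1)
           / ((2 * real n + a + b + 1) * fact n * Gamma (real n + a + b + 1)))"

definition jacobi_gamma_tilde :: "real \<Rightarrow> real \<Rightarrow> nat \<Rightarrow> nat \<Rightarrow> real" where
  "jacobi_gamma_tilde a b N n =
     (if n = N then (2 + (a + b + 1) / real N) * jacobi_gamma a b N else jacobi_gamma a b n)"

definition conn_coeffs :: "real \<Rightarrow> real \<Rightarrow> real \<Rightarrow> real \<Rightarrow> nat \<Rightarrow> nat \<Rightarrow> real" where
  "conn_coeffs a b a' b' n =
     (THE c. (\<forall>l>n. c l = 0) \<and>
             jacobi_poly a b n = (\<Sum>l\<le>n. smult (c l) (jacobi_poly a' b' l)))"

definition conn_coeff :: "real \<Rightarrow> real \<Rightarrow> real \<Rightarrow> real \<Rightarrow> nat \<Rightarrow> nat \<Rightarrow> real" where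
  "conn_coeff a b a' b' l n = conn_coeffs a b a' b' n l"

end

theory Submission
  imports Defs
begin


lemma beta_gen:
  fixes T p q :: real
  assumes T: "T > -1" and p: "p > -1" and q: "q > -1"
  shows "((\<lambda>y. (T - y) powr p * (1 + y) powr q) has_integral
           (1 + T) powr (p + q + 1) * Beta (q + 1) (p + 1)) {-1..T}"
proof -
  have B: "((\<lambda>u. u powr q * (1 - u) powr p) has_integral Beta (q+1) (p+1)) (cbox 0 1)"
    using has_integral_Beta_real[of "q+1" "p+1"] p q by simp
  define m where "m = 1 / (1 + T)"
  have m: "m > 0" using T by (simp add: m_def)
  from has_integral_affinity'[OF B m, of m]
  have H: "((\<lambda>x. (m * x + m) powr q * (1 - (m * x + m)) powr p) has_integral inverse m * Beta (q + 1) (p + 1))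
      {- (inverse m * m)..inverse m * (1 - m)}" by simp
  have e1: "inverse m * m = 1" using m by simp
  have e2: "inverse m * (1 - m) = T" using T by (simp add: m_def field_simps)
  have e3: "inverse m = 1 + T" by (simp add: m_def)
  have H2: "((\<lambda>x. (m * x + m) powr q * (1 - (m * x + m)) powr p) has_integral Beta (q+1) (p+1) * (1 + T))
       {-1..T}" using H unfolding e1 e2 by (simp add: e3 mult_ac)
  define K where "K = (1 + T) powr (p + q)"
  from has_integral_mult_right[OF H2, of K]
  have H3: "((\<lambda>x. K * ((m * x + m) powr q * (1 - (m * x + m)) powr p)) has_integral K * (Beta (q+1) (p+1) * (1 + T))) {-1..T}" .
  have val: "K * (Beta (q+1) (p+1) * (1 + T)) = (1 + T) powr (p + q + 1) * Beta (q + 1) (p + 1)"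
    using T by (simp add: K_def powr_add mult_ac)
  have "((\<lambda>y. (T - y) powr p * (1 + y) powr q) has_integral K * (Beta (q+1) (p+1) * (1 + T))) {-1..T}"
  proof (rule has_integral_spike_finite[OF _ _ H3])
    show "finite {}" by simp
  next
    fix x assume x: "x \<in> {-1..T} - {}"
    have a1: "m * x + m = (1 + x) / (1 + T)" using T by (simp add: m_def field_simps)
    have a2: "1 - (m * x + m) = (T - x) / (1 + T)" using T by (simp add: m_def field_simps)
    have b1: "(m * x + m) powr q = (1 + x) powr q / (1 + T) powr q"
      unfolding a1 using x T by (simp add: powr_divide)
    have b2: "(1 - (m * x + m)) powr p = (T - x) powr p / (1 + T) powr p"
      unfolding a2 using x T by (simp add: powr_divide)
    have "K * ((m * x + m) powr q * (1 - (m * x + m)) powr p)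
        = K * ((1 + x) powr q / (1 + T) powr q * ((T - x) powr p / (1 + T) powr p))"
      unfolding b1 b2 ..
    also have "\<dots> = (T - x) powr p * (1 + x) powr q"
      using T by (simp add: K_def powr_add field_simps)
    finally show "(T - x) powr p * (1 + x) powr q = K * ((m * x + m) powr q * (1 - (m * x + m)) powr p)" by simp
  qed
  then show ?thesis using val by simp
qed


lemma Gamma_plus1_pos: "(z::real) > 0 \<Longrightarrow> Gamma (z + 1) = z * Gamma z"
  by (rule Gamma_plus1) (auto elim!: nonpos_Ints_cases)

definition shc :: "real poly \<Rightarrow> nat \<Rightarrow> real" where
  "shc Q k = coeff (pcompose Q [:-1, 1:]) k"

lemma poly_shc_gen:
  assumes "degree Q \<le> n"
  shows "poly Q y = (\<Sum>k\<le>n. shc Q k * (1 + y) ^ k)"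
proof -
  have d: "degree (pcompose Q [:-1, 1:]) = degree Q" by (simp add: degree_pcompose)
  have "poly Q y = poly (pcompose Q [:-1, 1:]) (1 + y)" by (simp add: poly_pcompose)
  also have "\<dots> = (\<Sum>k\<le>degree Q. shc Q k * (1 + y) ^ k)"
    unfolding poly_altdef d shc_def ..
  also have "\<dots> = (\<Sum>k\<le>n. shc Q k * (1 + y) ^ k)"
    by (rule sum.mono_neutral_left) (use assms d in \<open>auto simp: shc_def coeff_eq_0\<close>)
  finally show ?thesis .
qed

lemma shc_zero: "k > degree Q \<Longrightarrow> shc Q k = 0"
  by (simp add: shc_def coeff_eq_0 degree_pcompose)

definition Lop :: "real \<Rightarrow> real poly \<Rightarrow> real poly" where
  "Lop \<mu> Q = (\<Sum>k\<le>degree Q. smult (shc Q k * fact k / Gamma (real k + 1 - \<mu>)) ([:1, 1:] ^ k))"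

lemma poly_Lop_gen:
  assumes "degree Q \<le> n"
  shows "poly (Lop \<mu> Q) x = (\<Sum>k\<le>n. shc Q k * fact k / Gamma (real k + 1 - \<mu>) * (1 + x) ^ k)"
proof -
  have "poly (Lop \<mu> Q) x = (\<Sum>k\<le>degree Q. shc Q k * fact k / Gamma (real k + 1 - \<mu>) * (1 + x) ^ k)"
    by (simp add: Lop_def poly_sum poly_power)
  also have "\<dots> = (\<Sum>k\<le>n. shc Q k * fact k / Gamma (real k + 1 - \<mu>) * (1 + x) ^ k)"
    by (rule sum.mono_neutral_left) (use assms in \<open>auto simp: shc_zero\<close>)
  finally show ?thesis .
qed

lemma rl_int_poly:
  assumes mu: "0 < \<mu>" "\<mu> < 1" and t: "t > -1"
  shows "rl_int (1 - \<mu>) (poly Q) t =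
     (\<Sum>k\<le>degree Q. shc Q k * fact k / Gamma (real k + 2 - \<mu>) * (1 + t) powr (real k + 1 - \<mu>))"
proof -
  let ?d = "degree Q"
  have each: "((\<lambda>y. shc Q k * ((t - y) powr (- \<mu>) * (1 + y) powr real k)) has_integral
      shc Q k * ((1 + t) powr (- \<mu> + real k + 1) * Beta (real k + 1) (- \<mu> + 1))) {-1..t}" for k
    by (rule has_integral_mult_right, rule beta_gen) (use mu t in auto)
  have S: "((\<lambda>y. \<Sum>k\<le>?d. shc Q k * ((t - y) powr (- \<mu>) * (1 + y) powr real k)) has_integral
      (\<Sum>k\<le>?d. shc Q k * ((1 + t) powr (- \<mu> + real k + 1) * Beta (real k + 1) (- \<mu> + 1)))) {-1..t}"
    by (rule has_integral_sum) (use each in auto)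
  have S2: "((\<lambda>y. (t - y) powr ((1 - \<mu>) - 1) * poly Q y) has_integral
      (\<Sum>k\<le>?d. shc Q k * ((1 + t) powr (- \<mu> + real k + 1) * Beta (real k + 1) (- \<mu> + 1)))) {-1..t}"
  proof (rule has_integral_spike_finite[OF _ _ S])
    show "finite {-1::real}" by simp
  next
    fix y :: real assume y: "y \<in> {-1..t} - {-1}"
    then have y1: "1 + y > 0" by auto
    have "(t - y) powr ((1 - \<mu>) - 1) * poly Q y = (t - y) powr (- \<mu>) * (\<Sum>k\<le>?d. shc Q k * (1 + y) ^ k)"
      by (simp add: poly_shc_gen[of Q ?d])
    also have "\<dots> = (\<Sum>k\<le>?d. shc Q k * ((t - y) powr (- \<mu>) * (1 + y) powr real k))"
      using y1 by (simp add: sum_distrib_left powr_realpow mult_ac)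
    finally show "(t - y) powr ((1 - \<mu>) - 1) * poly Q y = (\<Sum>k\<le>?d. shc Q k * ((t - y) powr (- \<mu>) * (1 + y) powr real k))" .
  qed
  have G: "Beta (real k + 1) (1 - \<mu>) / Gamma (1 - \<mu>) = fact k / Gamma (real k + 2 - \<mu>)" for k
  proof -
    have "Gamma (1 - \<mu>) > 0" using mu by simp
    moreover have "Gamma (real k + 1) = fact k" using Gamma_fact[of k] by (simp add: add.commute)
    moreover have h: "real k + 1 + (1 - \<mu>) = real k + 2 - \<mu>" by simp
    ultimately show ?thesis unfolding Beta_def h by simp
  qed
  have e: "- \<mu> + real k + 1 = real k + 1 - \<mu>" for k by simp
  have "rl_int (1 - \<mu>) (poly Q) t =
      1 / Gamma (1 - \<mu>) * (\<Sum>k\<le>?d. shc Q k * ((1 + t) powr (- \<mu> + real k + 1) * Beta (real k + 1) (- \<mu> + 1)))"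
    unfolding rl_int_def using integral_unique[OF S2] by simp
  also have "\<dots> = (\<Sum>k\<le>?d. shc Q k * (Beta (real k + 1) (1 - \<mu>) / Gamma (1 - \<mu>)) * (1 + t) powr (real k + 1 - \<mu>))"
    unfolding e by (simp add: sum_distrib_left mult_ac)
  also have "\<dots> = (\<Sum>k\<le>?d. shc Q k * (fact k / Gamma (real k + 2 - \<mu>)) * (1 + t) powr (real k + 1 - \<mu>))"
    by (simp only: G)
  also have "\<dots> = (\<Sum>k\<le>degree Q. shc Q k * fact k / Gamma (real k + 2 - \<mu>) * (1 + t) powr (real k + 1 - \<mu>))"
    by simp
  finally show ?thesis .
qed

lemma rl_hat_poly:
  assumes mu: "0 < \<mu>" "\<mu> < 1" and x: "x > -1"
  shows "rl_hat_deriv \<mu> (poly Q) x = poly (Lop \<mu> Q) x"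
proof -
  let ?d = "degree Q"
  define c where "c k = shc Q k * fact k / Gamma (real k + 2 - \<mu>)" for k
  define F where "F t = (\<Sum>k\<le>?d. c k * (1 + t) powr (real k + 1 - \<mu>))" for t
  have P: "((\<lambda>t. (1 + t) powr r) has_real_derivative r * (1 + x) powr (r - 1)) (at x)" for r
    using x by (auto intro!: derivative_eq_intros)
  have D: "(F has_real_derivative
      (\<Sum>k\<le>?d. c k * ((real k + 1 - \<mu>) * (1 + x) powr (real k + 1 - \<mu> - 1)))) (at x)"
    unfolding F_def by (intro DERIV_sum DERIV_cmult P)
  have D2: "((\<lambda>t. rl_int (1 - \<mu>) (poly Q) t) has_real_derivative
      (\<Sum>k\<le>?d. c k * ((real k + 1 - \<mu>) * (1 + x) powr (real k + 1 - \<mu> - 1)))) (at x)"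
    by (rule has_field_derivative_transform_within_open[OF D, of "{-1<..}"])
       (use x mu in \<open>auto simp: F_def c_def rl_int_poly\<close>)
  have G: "fact k / Gamma (real k + 2 - \<mu>) * (real k + 1 - \<mu>) = fact k / Gamma (real k + 1 - \<mu>)" for k
  proof -
    have p: "real k + 1 - \<mu> > 0" using mu by simp
    have "Gamma (real k + 2 - \<mu>) = Gamma ((real k + 1 - \<mu>) + 1)"
      by (rule arg_cong[where f=Gamma]) simp
    also have "\<dots> = (real k + 1 - \<mu>) * Gamma (real k + 1 - \<mu>)"
      by (rule Gamma_plus1_pos[OF p])
    finally have "Gamma (real k + 2 - \<mu>) = (real k + 1 - \<mu>) * Gamma (real k + 1 - \<mu>)" .
    then show ?thesis using p by simp
  qed
  have "rl_hat_deriv \<mu> (poly Q) x = (1 + x) powr \<mu> *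
      (\<Sum>k\<le>?d. c k * ((real k + 1 - \<mu>) * (1 + x) powr (real k + 1 - \<mu> - 1)))"
    unfolding rl_hat_deriv_def rl_deriv_def using DERIV_imp_deriv[OF D2] by simp
  also have "\<dots> = (\<Sum>k\<le>?d. (1 + x) powr \<mu> * (c k * ((real k + 1 - \<mu>) * (1 + x) powr (real k + 1 - \<mu> - 1))))"
    by (simp add: sum_distrib_left)
  also have "\<dots> = (\<Sum>k\<le>?d. shc Q k * fact k / Gamma (real k + 1 - \<mu>) * ((1 + x) powr \<mu> * (1 + x) powr (real k - \<mu>)))"
  proof (rule sum.cong[OF refl])
    fix k
    have g: "fact k / Gamma (real k + 1 - \<mu>) = fact k / Gamma (real k + 2 - \<mu>) * (real k + 1 - \<mu>)"
      by (rule G[symmetric])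
    have e': "real k + 1 - \<mu> - 1 = real k - \<mu>" by simp
    have "(1 + x) powr \<mu> * (c k * ((real k + 1 - \<mu>) * (1 + x) powr (real k + 1 - \<mu> - 1)))
        = shc Q k * (fact k / Gamma (real k + 1 - \<mu>)) * ((1 + x) powr \<mu> * (1 + x) powr (real k - \<mu>))"
      unfolding c_def e' g by (simp add: mult_ac)
    then show "(1 + x) powr \<mu> * (c k * ((real k + 1 - \<mu>) * (1 + x) powr (real k + 1 - \<mu> - 1)))
        = shc Q k * fact k / Gamma (real k + 1 - \<mu>) * ((1 + x) powr \<mu> * (1 + x) powr (real k - \<mu>))"
      by simp
  qed
  also have "\<dots> = (\<Sum>k\<le>?d. shc Q k * fact k / Gamma (real k + 1 - \<mu>) * (1 + x) ^ k)"
    using x by (simp add: powr_add[symmetric] powr_realpow)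
  also have "\<dots> = poly (Lop \<mu> Q) x" by (rule poly_Lop_gen[symmetric]) simp
  finally show ?thesis .
qed


lemma alt_sum_ext:
  fixes f :: "nat \<Rightarrow> real"
  shows "(\<Sum>k\<le>n. (-1)^k * real (n choose k) * f k)
       = f 0 - (\<Sum>k\<le>n. (-1)^k * real (n choose Suc k) * f (Suc k))"
proof -
  have "(\<Sum>k\<le>n. (-1)^k * real (n choose k) * f k) = (\<Sum>k\<le>Suc n. (-1)^k * real (n choose k) * f k)"
    by simp
  also have "\<dots> = f 0 + (\<Sum>k\<le>n. (-1)^(Suc k) * real (n choose Suc k) * f (Suc k))"
    by (subst sum.atMost_Suc_shift) simp
  also have "\<dots> = f 0 - (\<Sum>k\<le>n. (-1)^k * real (n choose Suc k) * f (Suc k))"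
    by (simp add: sum_negf)
  finally show ?thesis .
qed

lemma alt_binom_Suc:
  fixes f :: "nat \<Rightarrow> real"
  shows "(\<Sum>k\<le>Suc n. (-1)^k * real (Suc n choose k) * f k)
       = (\<Sum>k\<le>n. (-1)^k * real (n choose k) * (f k - f (Suc k)))"
proof -
  have "(\<Sum>k\<le>Suc n. (-1)^k * real (Suc n choose k) * f k)
      = f 0 + (\<Sum>k\<le>n. (-1)^(Suc k) * real (Suc n choose Suc k) * f (Suc k))"
    by (subst sum.atMost_Suc_shift) simp
  also have "\<dots> = f 0 + (\<Sum>k\<le>n. - ((-1)^k * real (n choose Suc k) * f (Suc k))
                    - (-1)^k * real (n choose k) * f (Suc k))"
    by (intro arg_cong2[where f="(+)"] refl sum.cong) (simp_all add: algebra_simps)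
  also have "\<dots> = f 0 - (\<Sum>k\<le>n. (-1)^k * real (n choose Suc k) * f (Suc k))
                    - (\<Sum>k\<le>n. (-1)^k * real (n choose k) * f (Suc k))"
    by (simp add: sum_subtractf sum_negf)
  also have "\<dots> = (\<Sum>k\<le>n. (-1)^k * real (n choose k) * f k) - (\<Sum>k\<le>n. (-1)^k * real (n choose k) * f (Suc k))"
    by (simp add: alt_sum_ext[of n f])
  also have "\<dots> = (\<Sum>k\<le>n. (-1)^k * real (n choose k) * (f k - f (Suc k)))"
    by (simp add: algebra_simps sum_subtractf)
  finally show ?thesis .
qed

lemma fd_poch:
  "r < n \<Longrightarrow> (\<Sum>k\<le>n. (-1)^k * real (n choose k) * pochhammer (d + real k) r) = 0"
proof (induction n arbitrary: d r)
  case 0 then show ?case by simp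
next
  case (Suc n)
  show ?case
  proof (cases r)
    case 0
    then show ?thesis using alt_binom_Suc[of n "\<lambda>k. pochhammer (d + real k) r"] by simp
  next
    case (Suc r')
    have diff: "pochhammer (d + real k) r - pochhammer (d + real (Suc k)) r
        = - (real r' + 1) * pochhammer ((d + 1) + real k) r'" for k
    proof -
      have "pochhammer (d + real k) r = (d + real k) * pochhammer (d + real k + 1) r'"
        unfolding Suc by (rule pochhammer_rec)
      moreover have "pochhammer (d + real (Suc k)) r = (d + real (Suc k) + real r') * pochhammer (d + real (Suc k)) r'"
        unfolding Suc by (rule pochhammer_rec')
      ultimately show ?thesis by (simp add: algebra_simps)
    qed
    have "(\<Sum>k\<le>Suc n. (-1)^k * real (Suc n choose k) * pochhammer (d + real k) r)
        = (\<Sum>k\<le>n. (-1)^k * real (n choose k) * (- (real r' + 1) * pochhammer ((d + 1) + real k) r'))"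
      unfolding alt_binom_Suc diff ..
    also have "\<dots> = - (real r' + 1) * (\<Sum>k\<le>n. (-1)^k * real (n choose k) * pochhammer ((d + 1) + real k) r')"
      by (simp add: sum_distrib_left mult_ac)
    also have "\<dots> = 0" using Suc.IH[of r' "d + 1"] Suc.prems Suc by simp
    finally show ?thesis .
  qed
qed

lemma fd_recip:
  "c > 0 \<Longrightarrow> (\<Sum>k\<le>n. (-1)^k * real (n choose k) * (1 / (c + real k))) = fact n / pochhammer c (Suc n)"
proof (induction n arbitrary: c)
  case 0 then show ?case by simp
next
  case (Suc n)
  have c1: "c + 1 > 0" using Suc.prems by simp
  have "(\<Sum>k\<le>Suc n. (-1)^k * real (Suc n choose k) * (1 / (c + real k)))
      = (\<Sum>k\<le>n. (-1)^k * real (n choose k) * (1 / (c + real k) - 1 / ((c + 1) + real k)))"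
    unfolding alt_binom_Suc by (intro sum.cong refl) (simp add: add_ac)
  also have "\<dots> = (\<Sum>k\<le>n. (-1)^k * real (n choose k) * (1 / (c + real k)))
                 - (\<Sum>k\<le>n. (-1)^k * real (n choose k) * (1 / ((c + 1) + real k)))"
    by (simp add: algebra_simps sum_subtractf)
  also have "\<dots> = fact n / pochhammer c (Suc n) - fact n / pochhammer (c + 1) (Suc n)"
    using Suc.IH[OF Suc.prems] Suc.IH[OF c1] by simp
  also have "\<dots> = fact (Suc n) / pochhammer c (Suc (Suc n))"
  proof -
    have p1: "pochhammer c (Suc (Suc n)) = c * pochhammer (c + 1) (Suc n)" by (rule pochhammer_rec)
    have p2: "pochhammer c (Suc (Suc n)) = (c + real (Suc n)) * pochhammer c (Suc n)" by (rule pochhammer_rec')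
    have q1: "pochhammer c (Suc n) > 0" using Suc.prems by (rule pochhammer_pos)
    have q2: "pochhammer (c + 1) (Suc n) > 0" using c1 by (rule pochhammer_pos)
    have h1: "fact n / pochhammer c (Suc n) = fact n * (c + real (Suc n)) / pochhammer c (Suc (Suc n))"
    proof -
      have cn: "c + real (Suc n) > 0" using Suc.prems by simp
      have "fact n * (c + real (Suc n)) / ((c + real (Suc n)) * pochhammer c (Suc n)) = fact n / pochhammer c (Suc n)"
        using cn by (subst mult.commute[of "c + real (Suc n)"]) (rule nonzero_mult_divide_mult_cancel_right; simp)
      then show ?thesis unfolding p2 by simp
    qed
    have h2: "fact n / pochhammer (c + 1) (Suc n) = fact n * c / pochhammer c (Suc (Suc n))"
      unfolding p1 using Suc.prems by (subst mult.commute[of "fact n"]) (rule nonzero_mult_divide_mult_cancel_left[symmetric]; simp)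
    have "fact n / pochhammer c (Suc n) - fact n / pochhammer (c + 1) (Suc n)
        = fact n * (c + real (Suc n)) / pochhammer c (Suc (Suc n)) - fact n * c / pochhammer c (Suc (Suc n))"
      unfolding h1 h2 ..
    also have "\<dots> = fact (Suc n) / pochhammer c (Suc (Suc n))"
      by (simp add: diff_divide_distrib[symmetric] algebra_simps)
    finally show ?thesis .
  qed
  finally show ?case .
qed


lemma shc_add: "shc (p + q) k = shc p k + shc q k"
  by (simp add: shc_def pcompose_add)
lemma shc_diff: "shc (p - q) k = shc p k - shc q k"
  by (simp add: shc_def pcompose_diff)
lemma shc_smult: "shc (smult c p) k = c * shc p k"
  by (simp add: shc_def pcompose_smult)
lemma shc_sum: "shc (\<Sum>i\<in>A. f i) k = (\<Sum>i\<in>A. shc (f i) k)"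
  by (simp add: shc_def pcompose_sum coeff_sum)

lemma pcompose_power: "pcompose (p ^ m) q = (pcompose p q) ^ m"
  by (induction m) (simp_all add: pcompose_mult pcompose_1)

lemma shc_lin_power: "shc ([:1, 1:] ^ m) k = (if k = m then 1 else 0)"
proof -
  have "pcompose [:1, 1:] [:-1, 1:] = [:0, 1::real:]" by (simp add: pcompose_pCons)
  then have "pcompose ([:1, 1:] ^ m) [:-1, 1:] = monom (1::real) m"
    by (simp add: pcompose_power monom_altdef)
  then show ?thesis by (simp add: shc_def)
qed

lemma expand_shc:
  assumes "degree q \<le> n"
  shows "q = (\<Sum>k\<le>n. smult (shc q k) ([:1, 1:] ^ k))"
proof -
  have "poly q x = poly (\<Sum>k\<le>n. smult (shc q k) ([:1, 1:] ^ k)) x" for x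
    using poly_shc_gen[OF assms, of x] by (simp add: poly_sum poly_power add.commute)
  then show ?thesis by (simp add: poly_eq_poly_eq_iff[symmetric] fun_eq_iff)
qed

lemma shc_eqI: "(\<And>k. shc p k = shc q k) \<Longrightarrow> p = q"
proof -
  assume h: "\<And>k. shc p k = shc q k"
  have "p = (\<Sum>k\<le>max (degree p) (degree q). smult (shc p k) ([:1, 1:] ^ k))"
    by (rule expand_shc) simp
  also have "\<dots> = (\<Sum>k\<le>max (degree p) (degree q). smult (shc q k) ([:1, 1:] ^ k))"
    by (simp add: h)
  also have "\<dots> = q" by (rule expand_shc[symmetric]) simp
  finally show ?thesis .
qed

lemma shc_Lop: "shc (Lop \<mu> Q) j = shc Q j * fact j / Gamma (real j + 1 - \<mu>)"
proof (cases "j \<le> degree Q")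
  case True
  then show ?thesis
    by (simp add: Lop_def shc_sum shc_smult shc_lin_power if_distrib cong: if_cong)
next
  case False
  then show ?thesis
    by (auto simp: Lop_def shc_sum shc_smult shc_lin_power shc_zero if_distrib)
qed

lemma Lop_add: "Lop \<mu> (p + q) = Lop \<mu> p + Lop \<mu> q"
  by (rule shc_eqI) (simp add: shc_Lop shc_add add_divide_distrib algebra_simps)
lemma Lop_smult: "Lop \<mu> (smult c p) = smult c (Lop \<mu> p)"
  by (rule shc_eqI) (simp add: shc_Lop shc_smult)
lemma Lop_diff: "Lop \<mu> (p - q) = Lop \<mu> p - Lop \<mu> q"
  by (rule shc_eqI) (simp add: shc_Lop shc_diff diff_divide_distrib algebra_simps)
lemma Lop_0: "Lop \<mu> 0 = 0"
  by (simp add: Lop_def shc_def)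
lemma Lop_sum: "Lop \<mu> (\<Sum>i\<in>A. f i) = (\<Sum>i\<in>A. Lop \<mu> (f i))"
  by (induction A rule: infinite_finite_induct) (simp_all add: Lop_add Lop_0)

lemma Lop_zero_imp:
  assumes mu: "\<mu> < 1" and "Lop \<mu> Q = 0" shows "Q = 0"
proof -
  have "shc Q k = 0" for k
  proof -
    have "shc (Lop \<mu> Q) k = 0" using assms by (simp add: shc_def)
    moreover have "Gamma (real k + 1 - \<mu>) > 0" using mu by (intro Gamma_real_pos) simp
    then have "fact k / Gamma (real k + 1 - \<mu>) \<noteq> (0::real)" by simp
    ultimately show ?thesis by (simp add: shc_Lop)
  qed
  then show ?thesis using shc_eqI[of Q 0] by (simp add: shc_def)
qed

lemma poly_Lop_m1:
  assumes "\<mu> < 1" shows "poly (Lop \<mu> Q) (-1) = poly Q (-1) / Gamma (1 - \<mu>)"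
proof -
  have "poly (Lop \<mu> Q) (-1) = (\<Sum>k\<le>degree Q. shc Q k * fact k / Gamma (real k + 1 - \<mu>) * (1 + -1) ^ k)"
    by (rule poly_Lop_gen) simp
  also have "\<dots> = shc Q 0 / Gamma (1 - \<mu>)"
    by (simp add: zero_power if_distrib sum.delta cong: if_cong)
  also have "poly Q (-1) = (\<Sum>k\<le>degree Q. shc Q k * (1 + -1) ^ k)"
    by (rule poly_shc_gen) simp
  then have "poly Q (-1) = shc Q 0" by (simp add: zero_power if_distrib sum.delta cong: if_cong)
  ultimately show ?thesis by simp
qed

lemma degree_Lop: "degree (Lop \<mu> Q) \<le> degree Q"
  unfolding Lop_def
  by (rule degree_sum_le) (auto intro!: order.trans[OF degree_smult_le] simp: degree_linear_power)


definition Mom :: "real \<Rightarrow> real \<Rightarrow> nat \<Rightarrow> nat \<Rightarrow> real" where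
  "Mom a b j k = 2 powr (a + b + real j + real k + 1) * Beta (b + real k + 1) (a + real j + 1)"

definition Iw :: "real \<Rightarrow> real \<Rightarrow> real poly \<Rightarrow> real" where
  "Iw a b p = integral {-1..1} (\<lambda>t. poly p t * (1 - t) powr a * (1 + t) powr b)"

lemma has_mono:
  assumes a: "a > -1" and b: "b > -1"
  shows "((\<lambda>t. poly ([:1, -1:] ^ j * [:1, 1:] ^ k) t * (1 - t) powr a * (1 + t) powr b)
            has_integral Mom a b j k) {-1..1}"
proof -
  have H: "((\<lambda>y. (1 - y) powr (a + real j) * (1 + y) powr (b + real k)) has_integral
      (1 + 1) powr (a + real j + (b + real k) + 1) * Beta (b + real k + 1) (a + real j + 1)) {-1..1}"
    by (rule beta_gen) (use a b in auto)
  have v: "Mom a b j k = (1 + 1) powr (a + real j + (b + real k) + 1) * Beta (b + real k + 1) (a + real j + 1)"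
    by (simp add: Mom_def add_ac)
  show ?thesis unfolding v
  proof (rule has_integral_spike_finite[OF _ _ H])
    show "finite {-1, 1::real}" by simp
  next
    fix y :: real assume y: "y \<in> {-1..1} - {-1, 1}"
    then have y1: "1 - y > 0" "1 + y > 0" by auto
    have "poly ([:1, -1:] ^ j * [:1, 1:] ^ k) y * (1 - y) powr a * (1 + y) powr b
        = ((1 - y) powr real j * (1 - y) powr a) * ((1 + y) powr real k * (1 + y) powr b)"
      using y1 by (simp add: poly_power powr_realpow)
    also have "\<dots> = (1 - y) powr (a + real j) * (1 + y) powr (b + real k)"
      by (simp add: powr_add[symmetric] add_ac)
    finally show "poly ([:1, -1:] ^ j * [:1, 1:] ^ k) y * (1 - y) powr a * (1 + y) powr b
        = (1 - y) powr (a + real j) * (1 + y) powr (b + real k)" .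
  qed
qed

lemma Iw_mono:
  assumes "a > -1" "b > -1"
  shows "Iw a b ([:1, -1:] ^ j * [:1, 1:] ^ k) = Mom a b j k"
  unfolding Iw_def using has_mono[OF assms] by (rule integral_unique)

lemma has_Iw:
  assumes a: "a > -1" and b: "b > -1" and d: "degree p \<le> n"
  shows "((\<lambda>t. poly p t * (1 - t) powr a * (1 + t) powr b) has_integral
          (\<Sum>k\<le>n. shc p k * Mom a b 0 k)) {-1..1}"
proof -
  have e: "(\<lambda>t. poly p t * (1 - t) powr a * (1 + t) powr b) =
      (\<lambda>t. \<Sum>k\<le>n. shc p k * (poly ([:1, -1:] ^ 0 * [:1, 1:] ^ k) t * (1 - t) powr a * (1 + t) powr b))"
  proof
    fix t
    show "poly p t * (1 - t) powr a * (1 + t) powr b =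
      (\<Sum>k\<le>n. shc p k * (poly ([:1, -1:] ^ 0 * [:1, 1:] ^ k) t * (1 - t) powr a * (1 + t) powr b))"
      by (subst poly_shc_gen[OF d]) (simp add: sum_distrib_left sum_distrib_right poly_power add.commute mult_ac)
  qed
  show ?thesis unfolding e
    by (intro has_integral_sum finite_atMost has_integral_mult_right has_mono a b)
qed

lemma Iw_eq:
  assumes "a > -1" "b > -1" "degree p \<le> n"
  shows "Iw a b p = (\<Sum>k\<le>n. shc p k * Mom a b 0 k)"
  unfolding Iw_def using has_Iw[OF assms] by (rule integral_unique)

lemma Iw_add:
  assumes "a > -1" "b > -1"
  shows "Iw a b (p + q) = Iw a b p + Iw a b q"
proof -
  let ?n = "max (degree p) (degree q)"
  have "degree (p + q) \<le> ?n" by (rule degree_add_le) auto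
  then show ?thesis using assms
    by (simp add: Iw_eq[of a b _ ?n] shc_add sum.distrib algebra_simps)
qed

lemma Iw_smult:
  assumes "a > -1" "b > -1"
  shows "Iw a b (smult c p) = c * Iw a b p"
proof -
  have "degree (smult c p) \<le> degree p" by (rule degree_smult_le)
  then show ?thesis using assms
    by (simp add: Iw_eq[of a b _ "degree p"] shc_smult sum_distrib_left mult_ac)
qed

lemma Iw_0: "Iw a b 0 = 0" by (simp add: Iw_def)

lemma Iw_sum:
  assumes "a > -1" "b > -1"
  shows "Iw a b (\<Sum>i\<in>A. f i) = (\<Sum>i\<in>A. Iw a b (f i))"
  by (induction A rule: infinite_finite_induct) (simp_all add: Iw_0 Iw_add assms)

lemma Iw_diff:
  assumes "a > -1" "b > -1"
  shows "Iw a b (p - q) = Iw a b p - Iw a b q"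
  using Iw_add[OF assms, of "p - q" q] by simp

lemma Iw_minus:
  assumes "a > -1" "b > -1"
  shows "Iw a b (- p) = - Iw a b p"
  using Iw_smult[OF assms, of "-1" p] by simp

lemma smult_sum_right: "smult c (\<Sum>i\<in>A. f i) = (\<Sum>i\<in>A. smult c (f i))"
  by (induction A rule: infinite_finite_induct) (simp_all add: smult_add_right)

definition jc :: "real \<Rightarrow> real \<Rightarrow> nat \<Rightarrow> nat \<Rightarrow> real" where
  "jc a b n k = Gamma (real n + a + 1) / (fact n * Gamma (a + 1)) *
      (pochhammer (- real n) k * pochhammer (real n + a + b + 1) k / (pochhammer (a + 1) k * fact k)) / 2 ^ k"

lemma jac_alt: "jacobi_poly a b n = (\<Sum>k\<le>n. smult (jc a b n k) ([:1, -1:] ^ k))"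
proof -
  have h: "[:1/2, -1/2:] = smult (1/2) [:1, -1::real:]" by simp
  show ?thesis
    unfolding jacobi_poly_def h smult_power smult_sum_right smult_smult
    by (intro sum.cong refl) (simp add: jc_def power_one_over mult_ac)
qed

definition kk :: "real \<Rightarrow> real \<Rightarrow> nat \<Rightarrow> real" where
  "kk a b n = pochhammer (real n + a + b + 1) n / (2 ^ n * fact n)"

lemma kk_pos: "a > -1 \<Longrightarrow> b > -1 \<Longrightarrow> kk a b n > 0"
proof (cases n)
  case 0 then show ?thesis by (simp add: kk_def)
next
  case (Suc m)
  assume "a > -1" "b > -1"
  then have "real n + a + b + 1 > 0" using Suc by simp
  then show ?thesis by (simp add: kk_def pochhammer_pos)
qed

lemma degree_jac: "degree (jacobi_poly a b n) \<le> n"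
  unfolding jac_alt
  by (rule degree_sum_le) (auto intro!: order.trans[OF degree_smult_le] order.trans[OF degree_power_le])

lemma coeff_lin_pow_less: "k < n \<Longrightarrow> coeff ([:1, -1::real:] ^ k) n = 0"
  by (rule coeff_eq_0) (rule le_less_trans[OF degree_power_le], simp)

lemma coeff_lin_pow_same: "coeff ([:1, -1::real:] ^ n) n = (-1) ^ n"
proof -
  have "degree ([:1, -1::real:] ^ n) = n" by (subst degree_power_eq) simp_all
  then have "coeff ([:1, -1::real:] ^ n) n = lead_coeff ([:1, -1::real:] ^ n)" by simp
  also have "\<dots> = (-1) ^ n" by (simp add: lead_coeff_power)
  finally show ?thesis .
qed

lemma coeff_jac:
  assumes a: "a > -1"
  shows "coeff (jacobi_poly a b n) n = kk a b n"
proof -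
  have "coeff (jacobi_poly a b n) n = (\<Sum>k\<le>n. jc a b n k * coeff ([:1, -1:] ^ k) n)"
    by (simp add: jac_alt coeff_sum)
  also have "\<dots> = jc a b n n * (-1) ^ n"
    by (subst sum.remove[of _ n]) (auto simp: coeff_lin_pow_less coeff_lin_pow_same intro!: sum.neutral)
  also have "\<dots> = kk a b n"
  proof -
    have g1: "Gamma (a + 1) > 0" using a by simp
    have p: "pochhammer (a + 1) n = Gamma (a + 1 + real n) / Gamma (a + 1)"
      by (rule pochhammer_Gamma) (use a in \<open>auto elim!: nonpos_Ints_cases\<close>)
    have g2: "Gamma (real n + a + 1) > 0" using a by (intro Gamma_real_pos) simp
    have e: "Gamma (a + 1 + real n) = Gamma (real n + a + 1)" by (simp add: add_ac)
    show ?thesis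
      using g1 g2 unfolding jc_def kk_def p e
      by (simp add: pochhammer_same field_simps power_mult_distrib[symmetric])
  qed
  finally show ?thesis .
qed

lemma jac_nonzero: "a > -1 \<Longrightarrow> b > -1 \<Longrightarrow> coeff (jacobi_poly a b n) n \<noteq> 0"
  using kk_pos[of a b n] coeff_jac[of a b n] by simp

lemma degree_jac_eq: "a > -1 \<Longrightarrow> b > -1 \<Longrightarrow> degree (jacobi_poly a b n) = n"
  using degree_jac[of a b n] jac_nonzero[of a b n] le_degree[of "jacobi_poly a b n" n] by simp


lemma poch_binom: "pochhammer (- real n) k / fact k = (-1) ^ k * real (n choose k)"
proof -
  have "real (n choose k) = real n gchoose k" by (rule binomial_gbinomial)
  also have "\<dots> = (-1) ^ k * pochhammer (- real n) k / fact k" by (rule gbinomial_pochhammer)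
  finally have "real (n choose k) = (-1) ^ k * pochhammer (- real n) k / fact k" .
  then have "(-1) ^ k * real (n choose k) = ((-1) ^ k * (-1) ^ k) * pochhammer (- real n) k / fact k"
    by simp
  also have "(-1) ^ k * (-1) ^ k = (1::real)" by (simp add: power_mult_distrib[symmetric])
  finally show ?thesis by simp
qed

lemma poch_Gamma_pos: "(z::real) > 0 \<Longrightarrow> pochhammer z k = Gamma (z + real k) / Gamma z"
  by (rule pochhammer_Gamma) (auto elim!: nonpos_Ints_cases)

definition C0 :: "real \<Rightarrow> real \<Rightarrow> nat \<Rightarrow> nat \<Rightarrow> real" where
  "C0 a b n m = Gamma (real n + a + 1) / (fact n * Gamma (a + 1)) * 2 powr (a + b + real m + 1)
      * Gamma (b + real m + 1) * Gamma (a + 1) / Gamma (real n + a + b + 1)"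

lemma jc_Mom:
  assumes a: "a > -1" and b: "b > -1" and n: "n \<ge> 1"
  shows "jc a b n k * Mom a b k m = C0 a b n m * ((-1) ^ k * real (n choose k) *
            (Gamma (real n + a + b + 1 + real k) / Gamma (a + b + real m + 2 + real k)))"
proof -
  define c where "c = real n + a + b + 1"
  have c: "c > 0" using a b n by (simp add: c_def)
  have pc: "pochhammer c k = Gamma (c + real k) / Gamma c" by (rule poch_Gamma_pos[OF c])
  have pa: "pochhammer (a + 1) k = Gamma (a + 1 + real k) / Gamma (a + 1)"
    by (rule poch_Gamma_pos) (use a in simp)
  have ga: "Gamma (a + 1) > 0" "Gamma (a + 1 + real k) > 0" "Gamma c > 0" "Gamma (c + real k) > 0"
    using a c by (auto intro!: Gamma_real_pos)
  have gd: "Gamma (a + b + real m + 2 + real k) > 0" using a b by (intro Gamma_real_pos) simp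
  have M: "Mom a b k m = 2 powr (a + b + real m + 1) * 2 ^ k * (Gamma (b + real m + 1) * Gamma (a + 1 + real k)
              / Gamma (a + b + real m + 2 + real k))"
  proof -
    have e1: "b + real m + 1 + (a + real k + 1) = a + b + real m + 2 + real k" by simp
    have e2: "a + real k + 1 = a + 1 + real k" by simp
    have e3: "2 powr (a + b + real k + real m + 1) = 2 powr (a + b + real m + 1) * 2 ^ k"
      by (simp add: powr_add[symmetric] powr_realpow[symmetric] add_ac)
    show ?thesis unfolding Mom_def Beta_def e1 e3 by (simp add: e2)
  qed
  have J: "jc a b n k = Gamma (real n + a + 1) / (fact n * Gamma (a + 1)) *
      ((-1) ^ k * real (n choose k)) * (Gamma (c + real k) / Gamma c) / (Gamma (a + 1 + real k) / Gamma (a + 1)) / 2 ^ k"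
    unfolding jc_def c_def[symmetric] pc[symmetric] pa[symmetric] poch_binom[symmetric] by (simp add: mult_ac)
  show ?thesis
    unfolding J M C0_def c_def[symmetric]
    using ga gd by (simp add: field_simps)
qed

lemma jac_times_pow:
  "jacobi_poly a b n * q = (\<Sum>k\<le>n. smult (jc a b n k) ([:1, -1:] ^ k * q))"
  unfolding jac_alt by (simp add: sum_distrib_right)

lemma Iw_jac_pow:
  assumes a: "a > -1" and b: "b > -1" and n: "n \<ge> 1"
  shows "Iw a b (jacobi_poly a b n * [:1, 1:] ^ m) = C0 a b n m * (\<Sum>k\<le>n. (-1) ^ k * real (n choose k) *
            (Gamma (real n + a + b + 1 + real k) / Gamma (a + b + real m + 2 + real k)))"
  unfolding jac_times_pow using a b n
  by (simp add: Iw_sum Iw_smult Iw_mono jc_Mom sum_distrib_left)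

lemma ortho_pow:
  assumes a: "a > -1" and b: "b > -1" and mn: "m < n"
  shows "Iw a b (jacobi_poly a b n * [:1, 1:] ^ m) = 0"
proof -
  have n: "n \<ge> 1" using mn by simp
  define d where "d = a + b + real m + 2"
  have "Gamma (real n + a + b + 1 + real k) / Gamma (a + b + real m + 2 + real k) = pochhammer (d + real k) (n - m - 1)" for k
  proof -
    have p: "pochhammer (d + real k) (n - m - 1) = Gamma (d + real k + real (n - m - 1)) / Gamma (d + real k)"
      by (rule poch_Gamma_pos) (use a b in \<open>simp add: d_def\<close>)
    have e: "d + real k + real (n - m - 1) = real n + a + b + 1 + real k"
      using mn by (simp add: d_def of_nat_diff)
    have e2: "d + real k = a + b + real m + 2 + real k" by (simp add: d_def)
    show ?thesis unfolding e2[symmetric] using p[unfolded e] by (rule sym)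
  qed
  then show ?thesis
    using fd_poch[of "n - m - 1" n d] mn by (simp add: Iw_jac_pow[OF a b n])
qed

definition Vn :: "real \<Rightarrow> real \<Rightarrow> nat \<Rightarrow> real" where
  "Vn a b n = Iw a b (jacobi_poly a b n * [:1, 1:] ^ n)"

lemma Vn_eq:
  assumes a: "a > -1" and b: "b > -1" and n: "n \<ge> 1"
  shows "Vn a b n = C0 a b n n * (fact n / pochhammer (real n + a + b + 1) (Suc n))"
proof -
  define c where "c = real n + a + b + 1"
  have c: "c > 0" using a b n by (simp add: c_def)
  have "Gamma (real n + a + b + 1 + real k) / Gamma (a + b + real n + 2 + real k) = 1 / (c + real k)" for k
  proof -
    have p: "c + real k > 0" using c by simp
    have "Gamma (a + b + real n + 2 + real k) = Gamma ((c + real k) + 1)" by (simp add: c_def add_ac)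
    also have "\<dots> = (c + real k) * Gamma (c + real k)" by (rule Gamma_plus1_pos[OF p])
    finally have "Gamma (a + b + real n + 2 + real k) = (c + real k) * Gamma (c + real k)" .
    moreover have "Gamma (c + real k) > 0" using p by simp
    ultimately show ?thesis by (simp add: c_def)
  qed
  then show ?thesis unfolding Vn_def
    using fd_recip[OF c, of n] by (simp add: Iw_jac_pow[OF a b n] c_def)
qed

lemma ortho_low:
  assumes a: "a > -1" and b: "b > -1" and d: "degree q < n"
  shows "Iw a b (jacobi_poly a b n * q) = 0"
proof -
  have "q = (\<Sum>k\<le>n - 1. smult (shc q k) ([:1, 1:] ^ k))" by (rule expand_shc) (use d in simp)
  then have "jacobi_poly a b n * q = (\<Sum>k\<le>n - 1. smult (shc q k) (jacobi_poly a b n * [:1, 1:] ^ k))"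
    by (metis (no_types, lifting) mult_smult_right sum.cong sum_distrib_left)
  moreover have "k \<le> n - 1 \<Longrightarrow> Iw a b (jacobi_poly a b n * [:1, 1:] ^ k) = 0" for k
    by (rule ortho_pow[OF a b]) (use d in simp)
  ultimately show ?thesis by (simp add: Iw_sum[OF a b] Iw_smult[OF a b])
qed

lemma Iw_lead:
  assumes a: "a > -1" and b: "b > -1" and d: "degree q \<le> n"
  shows "Iw a b (jacobi_poly a b n * q) = coeff q n * Vn a b n"
proof -
  define R where "R = q - smult (coeff q n) ([:1, 1:] ^ n)"
  have dR: "degree R \<le> n" unfolding R_def
    by (intro degree_diff_le d order.trans[OF degree_smult_le]) (simp add: degree_linear_power)
  have cR: "coeff R n = 0" by (simp add: R_def coeff_linear_power)
  have IR: "Iw a b (jacobi_poly a b n * R) = 0"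
  proof (cases "R = 0")
    case True then show ?thesis by (simp add: Iw_0)
  next
    case False
    then have "degree R \<noteq> n" using cR by (metis leading_coeff_0_iff)
    then have "degree R < n" using dR by simp
    then show ?thesis by (rule ortho_low[OF a b])
  qed
  have "q = smult (coeff q n) ([:1, 1:] ^ n) + R" by (simp add: R_def)
  then have "jacobi_poly a b n * q = smult (coeff q n) (jacobi_poly a b n * [:1, 1:] ^ n) + jacobi_poly a b n * R"
    by (metis distrib_left mult_smult_right)
  then show ?thesis by (simp add: Iw_add[OF a b] Iw_smult[OF a b] IR Vn_def)
qed

lemma jac_0: assumes "a > -1" shows "jacobi_poly a b 0 = 1"
proof -
  have "Gamma (a + 1) > 0" using assms by (intro Gamma_real_pos) simp
  then show ?thesis unfolding jacobi_poly_def by simp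
qed

lemma jac_norm:
  assumes a: "a > -1" and b: "b > -1"
  shows "Iw a b (jacobi_poly a b n * jacobi_poly a b n) = jacobi_gamma a b n"
proof (cases "n = 0")
  case True
  have "Iw a b ([:1, -1:] ^ 0 * [:1, 1:] ^ 0) = Mom a b 0 0" by (rule Iw_mono[OF a b])
  then have "Iw a b 1 = Mom a b 0 0" by simp
  moreover have "b + 1 + (a + 1) = a + b + 2" by simp
  ultimately show ?thesis using True a
    by (simp add: jac_0 jacobi_gamma_def Mom_def Beta_def mult_ac add_ac)
next
  case False
  then have n: "n \<ge> 1" by simp
  have "Iw a b (jacobi_poly a b n * jacobi_poly a b n) = kk a b n * Vn a b n"
    using Iw_lead[OF a b degree_jac] coeff_jac[OF a] by simp
  also have "\<dots> = jacobi_gamma a b n"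
  proof -
    define c where "c = real n + a + b + 1"
    have c: "c > 0" using a b n by (simp add: c_def)
    have pc: "pochhammer c (Suc n) = (c + real n) * pochhammer c n" by (rule pochhammer_rec')
    have pp: "pochhammer c n > 0" using c by (rule pochhammer_pos)
    have g: "Gamma (a + 1) > 0" "Gamma c > 0" using a c by auto
    have e3: "2 powr (a + b + real n + 1) = 2 powr (a + b + 1) * 2 ^ n"
      by (simp add: powr_add[symmetric] powr_realpow[symmetric] add_ac)
    define X where "X = c + real n"
    have cn: "2 * real n + a + b + 1 = X" by (simp add: c_def X_def)
    have cn0: "X > 0" using c by (simp add: X_def)
    have pc': "pochhammer c (Suc n) = X * pochhammer c n" unfolding pc X_def ..
    have e4: "Gamma (real n + b + 1) = Gamma (b + real n + 1)" by (simp add: add_ac)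
    show ?thesis
      unfolding kk_def Vn_eq[OF a b n] C0_def jacobi_gamma_def c_def[symmetric] pc' e3 cn e4
      using False pp g cn0 by (simp add: field_simps)
  qed
  finally show ?thesis .
qed

lemma jac_orth:
  assumes a: "a > -1" and b: "b > -1" and nm: "n \<noteq> m"
  shows "Iw a b (jacobi_poly a b n * jacobi_poly a b m) = 0"
proof (cases "m < n")
  case True then show ?thesis
    using ortho_low[OF a b] degree_jac_eq[OF a b, of m] by simp
next
  case False
  then have "n < m" using nm by simp
  then show ?thesis
    using ortho_low[OF a b, of "jacobi_poly a b n" m] degree_jac_eq[OF a b, of n] by (simp add: mult.commute)
qed

lemma jacobi_gamma_pos:
  assumes a: "a > -1" and b: "b > -1"
  shows "jacobi_gamma a b n > 0"
proof (cases "n = 0")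
  case True then show ?thesis using a b by (simp add: jacobi_gamma_def)
next
  case False
  then have "real n + a + b + 1 > 0" "2 * real n + a + b + 1 > 0" using a b by auto
  then show ?thesis using a b False by (simp add: jacobi_gamma_def)
qed


lemma basis_exists:
  assumes a: "a > -1" and b: "b > -1"
  shows "degree p \<le> d \<Longrightarrow> \<exists>c. p = (\<Sum>n\<le>d. smult (c n) (jacobi_poly a b n))"
proof (induction d arbitrary: p)
  case 0
  then obtain c0 where "p = [:c0:]" by (metis degree0_coeffs le_zero_eq)
  then have "p = (\<Sum>n\<le>0. smult ((\<lambda>_. c0) n) (jacobi_poly a b n))" using jac_0[OF a] by simp
  then show ?case by (intro exI[of _ "\<lambda>_. c0"])
next
  case (Suc d)
  define t where "t = coeff p (Suc d) / coeff (jacobi_poly a b (Suc d)) (Suc d)"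
  define p' where "p' = p - smult t (jacobi_poly a b (Suc d))"
  have nz: "coeff (jacobi_poly a b (Suc d)) (Suc d) \<noteq> 0" by (rule jac_nonzero[OF a b])
  have d1: "degree p' \<le> Suc d" unfolding p'_def
    by (intro degree_diff_le Suc.prems order.trans[OF degree_smult_le] degree_jac)
  have c1: "coeff p' (Suc d) = 0" using nz by (simp add: p'_def t_def)
  have "degree p' \<le> d"
  proof (rule ccontr)
    assume "\<not> degree p' \<le> d"
    then have "degree p' = Suc d" using d1 by simp
    then have "p' = 0" using c1 by (metis leading_coeff_0_iff)
    then show False using \<open>degree p' = Suc d\<close> by simp
  qed
  then obtain c where c: "p' = (\<Sum>n\<le>d. smult (c n) (jacobi_poly a b n))" using Suc.IH by blast
  define c' where "c' n = (if n = Suc d then t else c n)" for n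
  have "p = p' + smult t (jacobi_poly a b (Suc d))" by (simp add: p'_def)
  also have "\<dots> = (\<Sum>n\<le>Suc d. smult (c' n) (jacobi_poly a b n))"
    unfolding c by (simp add: c'_def)
  finally show ?case by blast
qed

lemma basis_coef:
  assumes a: "a > -1" and b: "b > -1" and p: "p = (\<Sum>n\<le>d. smult (c n) (jacobi_poly a b n))" and m: "m \<le> d"
  shows "c m = Iw a b (p * jacobi_poly a b m) / jacobi_gamma a b m"
proof -
  have "Iw a b (p * jacobi_poly a b m) = (\<Sum>n\<le>d. c n * Iw a b (jacobi_poly a b n * jacobi_poly a b m))"
    unfolding p by (simp add: sum_distrib_right Iw_sum[OF a b] Iw_smult[OF a b])
  also have "\<dots> = (\<Sum>n\<le>d. (if n = m then c m * jacobi_gamma a b m else 0))"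
    by (intro sum.cong refl) (auto simp: jac_orth[OF a b] jac_norm[OF a b])
  also have "\<dots> = c m * jacobi_gamma a b m" using m by simp
  finally show ?thesis using jacobi_gamma_pos[OF a b, of m] by simp
qed

lemma conn_coeff_expand:
  assumes a: "a > -1" and b: "b > -1" and a': "a' > -1" and b': "b' > -1"
  shows "jacobi_poly a b n = (\<Sum>l\<le>n. smult (conn_coeff a b a' b' l n) (jacobi_poly a' b' l))"
proof -
  let ?P = "\<lambda>c. (\<forall>l>n. c l = 0) \<and> jacobi_poly a b n = (\<Sum>l\<le>n. smult (c l) (jacobi_poly a' b' l))"
  obtain c where c: "jacobi_poly a b n = (\<Sum>l\<le>n. smult (c l) (jacobi_poly a' b' l))"
    using basis_exists[OF a' b' degree_jac] by blast
  define c' where "c' l = (if l \<le> n then c l else 0)" for l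
  have Pc': "?P c'" using c by (simp add: c'_def)
  have uniq: "e = c'" if "?P e" for e
  proof
    fix l
    show "e l = c' l"
    proof (cases "l \<le> n")
      case True
      then show ?thesis
        using basis_coef[OF a' b' _ True, of _ e] basis_coef[OF a' b' _ True, of _ c'] that Pc' by metis
    next
      case False then show ?thesis using that by (simp add: c'_def)
    qed
  qed
  have "?P (THE c. ?P c)" by (rule theI[of ?P c', OF Pc' uniq])
  then show ?thesis unfolding conn_coeff_def conn_coeffs_def by simp
qed

definition shm :: "real poly \<Rightarrow> nat \<Rightarrow> real" where
  "shm q k = coeff (pcompose q [:1, -1:]) k"

lemma expand_shm:
  assumes "degree q \<le> n"
  shows "q = (\<Sum>k\<le>n. smult (shm q k) ([:1, -1:] ^ k))"
proof -
  have dq: "degree (pcompose q [:1, -1:]) = degree q" by (simp add: degree_pcompose)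
  have "poly q x = poly (\<Sum>k\<le>n. smult (shm q k) ([:1, -1:] ^ k)) x" for x
  proof -
    have "poly q x = poly (pcompose q [:1, -1:]) (1 - x)" by (simp add: poly_pcompose)
    also have "\<dots> = (\<Sum>k\<le>degree q. shm q k * (1 - x) ^ k)" unfolding poly_altdef dq shm_def ..
    also have "\<dots> = (\<Sum>k\<le>n. shm q k * (1 - x) ^ k)"
      by (rule sum.mono_neutral_left) (use assms dq in \<open>auto simp: shm_def coeff_eq_0\<close>)
    finally show ?thesis by (simp add: poly_sum poly_power)
  qed
  then show ?thesis by (simp add: poly_eq_poly_eq_iff[symmetric] fun_eq_iff)
qed

lemma shc_top:
  assumes "degree p \<le> n"
  shows "shc p n = coeff p n"
proof -
  have "coeff p n = coeff (\<Sum>k\<le>n. smult (shc p k) ([:1, 1:] ^ k)) n"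
    using expand_shc[OF assms] by simp
  also have "\<dots> = (\<Sum>k\<le>n. shc p k * coeff ([:1, 1:] ^ k) n)" by (simp add: coeff_sum)
  also have "\<dots> = shc p n * coeff ([:1, 1:] ^ n) n"
    by (subst sum.remove[of _ n]) (auto intro!: sum.neutral coeff_eq_0 simp: degree_linear_power)
  also have "\<dots> = shc p n" by (simp add: coeff_linear_power)
  finally show ?thesis by simp
qed


lemma Mom_dual:
  assumes mu: "0 < \<mu>" "\<mu> < 1"
  shows "fact k / Gamma (real k + 1 - \<mu>) * Mom \<mu> (- \<mu>) j k = Gamma (\<mu> + real j + 1) / fact j * Mom 0 0 j k"
proof -
  have e1: "- \<mu> + real k + 1 + (\<mu> + real j + 1) = real k + real j + 2" by simp
  have e5: "0 + real k + 1 + (0 + real j + 1) = real k + real j + 2" by simp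
  have e2: "\<mu> + - \<mu> + real j + real k + 1 = 0 + 0 + real j + real k + 1" by simp
  have e3: "- \<mu> + real k + 1 = real k + 1 - \<mu>" by simp
  have gk: "Gamma (real k + 1) = fact k" using Gamma_fact[of k] by (simp add: add.commute)
  have gj: "Gamma (real j + 1) = fact j" using Gamma_fact[of j] by (simp add: add.commute)
  have pos: "Gamma (real k + 1 - \<mu>) > 0" using mu by (intro Gamma_real_pos) simp
  show ?thesis
    unfolding Mom_def Beta_def e1 e2 e3 e5 using pos by (simp add: Gamma_fact add_ac mult_ac)
qed

lemma Lop_dual:
  assumes mu: "0 < \<mu>" "\<mu> < 1"
  shows "Iw \<mu> (- \<mu>) (Lop \<mu> p * [:1, -1:] ^ j) = Gamma (\<mu> + real j + 1) / fact j * Iw 0 0 (p * [:1, -1:] ^ j)"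
proof -
  have m1: "\<mu> > -1" "- \<mu> > -1" using mu by auto
  have z: "(0::real) > -1" by simp
  let ?d = "degree p"
  have L: "Lop \<mu> p * [:1, -1:] ^ j = (\<Sum>k\<le>?d. smult (shc p k * fact k / Gamma (real k + 1 - \<mu>)) ([:1, -1:] ^ j * [:1, 1:] ^ k))"
    unfolding Lop_def sum_distrib_right by (intro sum.cong refl) (simp add: mult.commute)
  have P0: "p = (\<Sum>k\<le>?d. smult (shc p k) ([:1, 1:] ^ k))" by (rule expand_shc) simp
  have "p * [:1, -1:] ^ j = (\<Sum>k\<le>?d. smult (shc p k) ([:1, 1:] ^ k)) * [:1, -1:] ^ j"
    using P0 by (rule arg_cong)
  also have "\<dots> = (\<Sum>k\<le>?d. smult (shc p k) ([:1, -1:] ^ j * [:1, 1:] ^ k))"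
    unfolding sum_distrib_right by (intro sum.cong refl) (simp add: mult.commute)
  finally have P: "p * [:1, -1:] ^ j = (\<Sum>k\<le>?d. smult (shc p k) ([:1, -1:] ^ j * [:1, 1:] ^ k))" .
  have "Iw \<mu> (- \<mu>) (Lop \<mu> p * [:1, -1:] ^ j) = (\<Sum>k\<le>?d. shc p k * (fact k / Gamma (real k + 1 - \<mu>) * Mom \<mu> (- \<mu>) j k))"
    unfolding L by (simp only: Iw_sum[OF m1] Iw_smult[OF m1] Iw_mono[OF m1]) (simp add: mult_ac)
  also have "\<dots> = (\<Sum>k\<le>?d. shc p k * (Gamma (\<mu> + real j + 1) / fact j * Mom 0 0 j k))"
    by (simp only: Mom_dual[OF mu])
  also have "\<dots> = Gamma (\<mu> + real j + 1) / fact j * Iw 0 0 (p * [:1, -1:] ^ j)"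
    unfolding P by (simp only: Iw_sum[OF z z] Iw_smult[OF z z] Iw_mono[OF z z]) (simp add: sum_distrib_left mult_ac)
  finally show ?thesis .
qed

lemma Lop_legendre:
  assumes mu: "0 < \<mu>" "\<mu> < 1"
  shows "Lop \<mu> (jacobi_poly 0 0 l) = smult (fact l / Gamma (real l + 1 - \<mu>)) (jacobi_poly \<mu> (- \<mu>) l)"
proof -
  have m1: "\<mu> > -1" "- \<mu> > -1" using mu by auto
  have z: "(0::real) > -1" by simp
  define R where "R = Lop \<mu> (jacobi_poly 0 0 l)"
  have dR: "degree R \<le> l" unfolding R_def by (rule order.trans[OF degree_Lop degree_jac])
  have orth: "Iw \<mu> (- \<mu>) (R * q) = 0" if dq: "degree q < l" for q
  proof -
    have "q = (\<Sum>j\<le>l - 1. smult (shm q j) ([:1, -1:] ^ j))" by (rule expand_shm) (use dq in simp)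
    then have "R * q = (\<Sum>j\<le>l - 1. smult (shm q j) (R * [:1, -1:] ^ j))"
      by (metis (no_types, lifting) mult_smult_right sum.cong sum_distrib_left)
    moreover have "Iw \<mu> (- \<mu>) (R * [:1, -1:] ^ j) = 0" if "j \<le> l - 1" for j
    proof -
      have "degree ([:1, -1::real:] ^ j) < l"
        using that dq by (intro le_less_trans[OF degree_power_le]) simp
      then have "Iw 0 0 (jacobi_poly 0 0 l * [:1, -1:] ^ j) = 0" by (rule ortho_low[OF z z])
      then show ?thesis unfolding R_def by (simp add: Lop_dual[OF mu])
    qed
    ultimately show ?thesis by (simp add: Iw_sum[OF m1] Iw_smult[OF m1])
  qed
  obtain c where c: "R = (\<Sum>n\<le>l. smult (c n) (jacobi_poly \<mu> (- \<mu>) n))"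
    using basis_exists[OF m1 dR] by blast
  have c0: "c n = 0" if "n < l" for n
  proof -
    have "c n = Iw \<mu> (- \<mu>) (R * jacobi_poly \<mu> (- \<mu>) n) / jacobi_gamma \<mu> (- \<mu>) n"
      by (rule basis_coef[OF m1 c]) (use that in simp)
    also have "Iw \<mu> (- \<mu>) (R * jacobi_poly \<mu> (- \<mu>) n) = 0"
      by (rule orth) (simp add: degree_jac_eq[OF m1] that)
    finally show ?thesis by simp
  qed
  have R1: "R = smult (c l) (jacobi_poly \<mu> (- \<mu>) l)"
    unfolding c by (subst sum.remove[of _ l]) (auto intro!: sum.neutral simp: c0)
  have "coeff R l = c l * kk \<mu> (- \<mu>) l" unfolding R1 by (simp add: coeff_jac[OF m1(1)])
  moreover have "coeff R l = kk 0 0 l * (fact l / Gamma (real l + 1 - \<mu>))"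
  proof -
    have "coeff R l = shc R l" by (rule shc_top[OF dR, symmetric])
    also have "\<dots> = shc (jacobi_poly 0 0 l) l * fact l / Gamma (real l + 1 - \<mu>)"
      unfolding R_def by (rule shc_Lop)
    also have "shc (jacobi_poly 0 0 l) l = kk 0 0 l"
      using shc_top[OF degree_jac] coeff_jac[OF z] by simp
    finally show ?thesis by simp
  qed
  moreover have "kk \<mu> (- \<mu>) l = kk 0 0 l" by (simp add: kk_def)
  moreover have "kk 0 0 l > 0" by (rule kk_pos[OF z z])
  ultimately have "kk 0 0 l * (c l - fact l / Gamma (real l + 1 - \<mu>)) = 0"
    by (simp add: algebra_simps)
  then have "c l = fact l / Gamma (real l + 1 - \<mu>)" using kk_pos[OF z z, of l] by simp
  then show ?thesis using R1 by (simp add: R_def)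
qed


lemma pderiv_sum': "pderiv (\<Sum>i\<in>A. f i) = (\<Sum>i\<in>A. pderiv (f i))"
  by (induction A rule: infinite_finite_induct) (simp_all add: pderiv_add)

lemma Mom_ibp:
  assumes a: "a > -1" and b: "b > -1"
  shows "real i * Mom a b 1 i = (a + 1) * Mom a b 0 (Suc i) - (b + 1) * Mom a b 1 i"
proof -
  have pa: "a + 1 > 0" and pb: "b + real i + 1 > 0" using a b by auto
  have g1: "Gamma (a + 1 + 1) = (a + 1) * Gamma (a + 1)" by (rule Gamma_plus1_pos[OF pa])
  have g2: "Gamma (b + real i + 1 + 1) = (b + real i + 1) * Gamma (b + real i + 1)" by (rule Gamma_plus1_pos[OF pb])
  have e1: "a + real (1::nat) + 1 = a + 1 + 1" by simp
  have e2: "b + real (Suc i) + 1 = b + real i + 1 + 1" by simp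
  have e3: "b + real i + 1 + (a + 1 + 1) = a + b + real i + 3" by simp
  have e4: "b + real i + 1 + 1 + (a + real (0::nat) + 1) = a + b + real i + 3" by simp
  have e5: "a + b + real (1::nat) + real i + 1 = a + b + real i + 2" by simp
  have e6: "a + b + real (0::nat) + real (Suc i) + 1 = a + b + real i + 2" by simp
  have e7: "a + real (0::nat) + 1 = a + 1" by simp
  have gp: "Gamma (a + b + real i + 3) > 0" using a b by (intro Gamma_real_pos) simp
  show ?thesis
    unfolding Mom_def Beta_def e1 e2 e3 e4 e5 e6 e7 g1 g2
    using gp by (simp add: field_simps)
qed

lemma pderiv_pow_lin: "pderiv ([:1, 1:] ^ i) * [:1, 0, -1:] = smult (real i) ([:1, -1:] ^ 1 * [:1, 1:] ^ i)"
proof (cases i)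
  case 0 then show ?thesis by simp
next
  case (Suc j)
  have h: "[:1, 0, -1::real:] = [:1, -1:] * [:1, 1:]" by simp
  have d: "pderiv [:1, 1::real:] = 1" by (simp add: pderiv_pCons)
  show ?thesis unfolding Suc pderiv_power_Suc d h
    by (simp only: mult_1_right mult_1_left mult_smult_left mult_smult_right power_Suc power_one_right ac_simps)
qed

lemma ibp:
  assumes a: "a > -1" and b: "b > -1"
  shows "Iw a b (pderiv f * [:1, 0, -1:]) = Iw a b (f * [:a - b, a + b + 2:])"
proof -
  let ?d = "degree f"
  have F: "f = (\<Sum>i\<le>?d. smult (shc f i) ([:1, 1:] ^ i))" by (rule expand_shc) simp
  have L1: "[:a - b, a + b + 2:] = smult (a + 1) [:1, 1:] - smult (b + 1) [:1, -1:]"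
    by (simp add: algebra_simps)
  have T: "Iw a b (pderiv ([:1, 1:] ^ i) * [:1, 0, -1:]) = Iw a b ([:1, 1:] ^ i * [:a - b, a + b + 2:])" for i
  proof -
    have "Iw a b (pderiv ([:1, 1:] ^ i) * [:1, 0, -1:]) = real i * Mom a b 1 i"
      unfolding pderiv_pow_lin by (simp only: Iw_smult[OF a b] Iw_mono[OF a b])
    moreover have "[:1, 1:] ^ i * [:a - b, a + b + 2:] =
        smult (a + 1) ([:1, -1:] ^ 0 * [:1, 1:] ^ Suc i) - smult (b + 1) ([:1, -1:] ^ 1 * [:1, 1:] ^ i)"
      by (intro poly_ext) (simp add: poly_power algebra_simps)
    then have "Iw a b ([:1, 1:] ^ i * [:a - b, a + b + 2:]) = (a + 1) * Mom a b 0 (Suc i) - (b + 1) * Mom a b 1 i"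
      by (simp only: Iw_diff[OF a b] Iw_smult[OF a b] Iw_mono[OF a b])
    ultimately show ?thesis using Mom_ibp[OF a b, of i] by simp
  qed
  have "Iw a b (pderiv f * [:1, 0, -1:]) = (\<Sum>i\<le>?d. shc f i * Iw a b (pderiv ([:1, 1:] ^ i) * [:1, 0, -1:]))"
    by (subst F) (simp add: pderiv_sum' pderiv_smult sum_distrib_right Iw_sum[OF a b] Iw_smult[OF a b] del: mult_pCons_left mult_pCons_right)
  also have "\<dots> = (\<Sum>i\<le>?d. shc f i * Iw a b ([:1, 1:] ^ i * [:a - b, a + b + 2:]))"
    by (simp only: T)
  also have "\<dots> = Iw a b (f * [:a - b, a + b + 2:])"
    by (subst (2) F) (simp add: sum_distrib_right Iw_sum[OF a b] Iw_smult[OF a b] del: mult_pCons_left mult_pCons_right)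
  finally show ?thesis .
qed

lemma coeff_mult_top:
  fixes p q :: "real poly"
  assumes "degree p \<le> m" "degree q \<le> n"
  shows "coeff (p * q) (m + n) = coeff p m * coeff q n"
proof -
  have "coeff (p * q) (m + n) = (\<Sum>i\<le>m + n. coeff p i * coeff q (m + n - i))" by (rule coeff_mult)
  also have "\<dots> = coeff p m * coeff q (m + n - m)"
  proof (rule sum.remove[of _ m, THEN trans])
    show "finite {..m + n}" "m \<in> {..m + n}" by auto
    have z: "coeff p i * coeff q (m + n - i) = 0" if "i \<in> {..m + n} - {m}" for i
    proof (cases "i < m")
      case True then have "m + n - i > n" by simp
      then have "coeff q (m + n - i) = 0" using assms by (intro coeff_eq_0) simp
      then show ?thesis by simp
    next
      case False then have "i > m" using that by simp
      then have "coeff p i = 0" using assms by (intro coeff_eq_0) simp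
      then show ?thesis by simp
    qed
    have "(\<Sum>i\<in>{..m + n} - {m}. coeff p i * coeff q (m + n - i)) = 0"
      by (rule sum.neutral) (use z in blast)
    then show "coeff p m * coeff q (m + n - m) + (\<Sum>i\<in>{..m + n} - {m}. coeff p i * coeff q (m + n - i)) =
        coeff p m * coeff q (m + n - m)" by simp
  qed
  finally show ?thesis by simp
qed

lemma degree_drop:
  fixes p :: "real poly"
  assumes "degree p \<le> Suc m" "coeff p (Suc m) = 0"
  shows "degree p \<le> m"
proof (rule ccontr)
  assume "\<not> degree p \<le> m"
  then have "degree p = Suc m" using assms by simp
  then have "p = 0" using assms by (metis leading_coeff_0_iff)
  then show False using \<open>degree p = Suc m\<close> by simp
qed


lemma quad_NN:
  fixes N :: nat and a b :: real and xs \<omega> :: "nat \<Rightarrow> real"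
  assumes N: "N \<ge> 1" and a: "a > -1" and b: "b > -1"
    and zeros: "\<forall>i\<le>N. poly ([:1, 0, -1:] * pderiv (jacobi_poly a b N)) (xs i) = 0"
    and weights: "\<forall>p :: real poly. degree p \<le> 2 * N - 1 \<longrightarrow>
        integral {-1..1} (\<lambda>t. poly p t * (1 - t) powr a * (1 + t) powr b)
          = (\<Sum>j\<le>N. poly p (xs j) * \<omega> j)"
  shows "(\<Sum>i\<le>N. poly (jacobi_poly a b N * jacobi_poly a b N) (xs i) * \<omega> i)
           = (2 + (a + b + 1) / real N) * jacobi_gamma a b N"
proof -
  define P where "P = jacobi_poly a b N"
  define k where "k = kk a b N"
  define W where "W = [:1, 0, -1::real:]"
  define L1 where "L1 = [:a - b, a + b + 2:]"
  define Q where "Q = W * pderiv P"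
  define X1 where "X1 = monom (1::real) (N - 1)"
  define E where "E = P * P + smult (k / real N) (X1 * Q)"
  have dP: "degree P \<le> N" unfolding P_def by (rule degree_jac)
  have cP: "coeff P N = k" unfolding P_def k_def by (rule coeff_jac[OF a])
  have dW: "degree W \<le> 2" by (simp add: W_def)
  have cW: "coeff W 2 = -1" by (simp add: W_def numeral_2_eq_2)
  have dpP: "degree (pderiv P) \<le> N - 1" using dP by (simp add: degree_pderiv)
  have dQ: "degree Q \<le> 2 + (N - 1)" unfolding Q_def
    by (rule order.trans[OF degree_mult_le]) (use dW dpP in simp)
  have cQ: "coeff Q (2 + (N - 1)) = - (real N * k)"
  proof -
    have "coeff Q (2 + (N - 1)) = coeff W 2 * coeff (pderiv P) (N - 1)"
      unfolding Q_def by (rule coeff_mult_top[OF dW dpP])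
    also have "\<dots> = - (real N * k)" using N by (simp add: cW coeff_pderiv cP)
    finally show ?thesis .
  qed
  have dX1: "degree X1 \<le> N - 1" by (simp add: X1_def degree_monom_le)
  have cX1: "coeff X1 (N - 1) = 1" by (simp add: X1_def)
  have e2N: "N - 1 + (2 + (N - 1)) = N + N" using N by simp
  have cXQ: "coeff (X1 * Q) (N + N) = - (real N * k)"
    using coeff_mult_top[OF dX1 dQ] cX1 cQ e2N by simp
  have cPP: "coeff (P * P) (N + N) = k * k" using coeff_mult_top[OF dP dP] cP by simp
  have dE0: "degree E \<le> Suc (2 * N - 1)"
  proof -
    have "degree (P * P) \<le> N + N" by (rule order.trans[OF degree_mult_le]) (use dP in simp)
    moreover have "degree (X1 * Q) \<le> N + N"
      by (rule order.trans[OF degree_mult_le]) (use dX1 dQ e2N in simp)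
    then have "degree (smult (k / real N) (X1 * Q)) \<le> N + N" by (rule order.trans[OF degree_smult_le])
    ultimately have "degree E \<le> N + N" unfolding E_def by (rule degree_add_le)
    then show ?thesis using N by simp
  qed
  have cE: "coeff E (Suc (2 * N - 1)) = 0"
  proof -
    have s: "Suc (2 * N - 1) = N + N" using N by simp
    show ?thesis unfolding s E_def using N by (simp add: cXQ cPP)
  qed
  have dE: "degree E \<le> 2 * N - 1" by (rule degree_drop[OF dE0 cE])
  have sumE: "(\<Sum>i\<le>N. poly E (xs i) * \<omega> i) = (\<Sum>i\<le>N. poly (P * P) (xs i) * \<omega> i)"
  proof (intro sum.cong refl)
    fix i assume "i \<in> {..N}"
    then have "poly Q (xs i) = 0" using zeros by (simp add: Q_def W_def P_def)
    then show "poly E (xs i) * \<omega> i = poly (P * P) (xs i) * \<omega> i" by (simp add: E_def)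
  qed
  have IE: "Iw a b E = (\<Sum>i\<le>N. poly E (xs i) * \<omega> i)"
    using weights dE unfolding Iw_def by blast
  define g where "g = X1 * L1 - pderiv X1 * W"
  have eq1: "pderiv (X1 * P) * W = X1 * Q + P * (pderiv X1 * W)"
    unfolding pderiv_mult Q_def by (simp only: algebra_simps)
  have H1: "Iw a b (pderiv (X1 * P) * W) = Iw a b (X1 * Q) + Iw a b (P * (pderiv X1 * W))"
    by (simp only: eq1 Iw_add[OF a b])
  have H2: "Iw a b (pderiv (X1 * P) * W) = Iw a b (X1 * P * L1)"
    unfolding W_def L1_def by (rule ibp[OF a b])
  have eq2: "X1 * P * L1 - P * (pderiv X1 * W) = P * g"
    unfolding g_def by (simp only: algebra_simps)
  have H3: "Iw a b (X1 * P * L1) - Iw a b (P * (pderiv X1 * W)) = Iw a b (P * g)"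
    by (simp only: eq2 Iw_diff[OF a b, symmetric])
  have "Iw a b (X1 * Q) = Iw a b (P * g)" using H1 H2 H3 by linarith
  then have IXQ: "Iw a b (X1 * Q) = Iw a b (P * g)" .
  have dg_cg: "degree g \<le> N \<and> coeff g N = real N + a + b + 1"
  proof -
    have dL1: "degree L1 \<le> 1" by (simp add: L1_def)
    have eN: "N - 1 + 1 = N" using N by simp
    have d1: "degree (X1 * L1) \<le> N"
      by (rule order.trans[OF degree_mult_le]) (use dX1 dL1 eN in simp)
    have c1: "coeff (X1 * L1) N = a + b + 2"
      using coeff_mult_top[OF dX1 dL1] cX1 eN by (simp add: L1_def)
    have pX: "pderiv X1 = monom (real (N - 1)) (N - 1 - 1)"
      by (simp add: X1_def pderiv_monom)
    show ?thesis
    proof (cases "N = 1")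
      case True
      then have "pderiv X1 = 0" using pX by simp
      then show ?thesis using d1 c1 True by (simp add: g_def)
    next
      case False
      then have N2: "N \<ge> 2" using N by simp
      have dpX: "degree (pderiv X1) \<le> N - 2" unfolding pX by (rule order.trans[OF degree_monom_le]) simp
      have eN2: "N - 2 + 2 = N" using N2 by simp
      have d2: "degree (pderiv X1 * W) \<le> N"
        by (rule order.trans[OF degree_mult_le]) (use dpX dW eN2 in simp)
      have c2: "coeff (pderiv X1 * W) N = - (real N - 1)"
      proof -
        have "coeff (pderiv X1 * W) (N - 2 + 2) = coeff (pderiv X1) (N - 2) * coeff W 2"
          by (rule coeff_mult_top[OF dpX dW])
        moreover have "coeff (pderiv X1) (N - 2) = real (N - 1)"
        proof -
          have e: "N - 1 - 1 = N - 2" by simp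
          show ?thesis unfolding pX e by simp
        qed
        ultimately show ?thesis using eN2 N2 by (simp add: cW of_nat_diff)
      qed
      have "degree g \<le> N" unfolding g_def by (rule degree_diff_le[OF d1 d2])
      moreover have "coeff g N = real N + a + b + 1" using c1 c2 by (simp add: g_def)
      ultimately show ?thesis by simp
    qed
  qed
  have IPg: "Iw a b (P * g) = (real N + a + b + 1) * Vn a b N"
    using Iw_lead[OF a b, of g N] dg_cg by (simp add: P_def)
  have IPP: "Iw a b (P * P) = k * Vn a b N"
    using Iw_lead[OF a b dP] cP by (simp add: P_def)
  have gam: "jacobi_gamma a b N = k * Vn a b N"
    using jac_norm[OF a b, of N] IPP by (simp add: P_def)
  have "Iw a b E = Iw a b (P * P) + k / real N * Iw a b (X1 * Q)"
    by (simp add: E_def Iw_add[OF a b] Iw_smult[OF a b])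
  also have "\<dots> = (2 + (a + b + 1) / real N) * jacobi_gamma a b N"
    unfolding IXQ IPg IPP gam using N by (simp add: field_simps)
  finally show ?thesis using IE sumE by (simp add: P_def)
qed


lemma nodes_strict:
  assumes mono: "\<forall>i<N. xs i < xs (Suc i)"
  shows "i < k \<Longrightarrow> k \<le> N \<Longrightarrow> (xs i :: real) < xs k"
proof (induction k)
  case 0 then show ?case by simp
next
  case (Suc k)
  have s: "xs k < xs (Suc k)" using mono Suc.prems by simp
  show ?case
  proof (cases "i = k")
    case True then show ?thesis using s by simp
  next
    case False then have "xs i < xs k" using Suc by simp
    then show ?thesis using s by simp
  qed
qed

lemma nodes_inj:
  assumes mono: "\<forall>i<N. xs i < xs (Suc i)"
  shows "inj_on (xs :: nat \<Rightarrow> real) {..N}"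
proof (rule inj_onI)
  fix i k assume "i \<in> {..N}" "k \<in> {..N}" "xs i = xs k"
  then show "i = k" using nodes_strict[OF mono, of i k] nodes_strict[OF mono, of k i]
    by (metis atMost_iff less_irrefl nat_neq_iff)
qed

lemma gtilde_pos:
  assumes N: "N \<ge> 1" and a: "a > -1" and b: "b > -1"
  shows "jacobi_gamma_tilde a b N n > 0"
proof (cases "n = N")
  case True
  have "(a + b + 1) / real N > -1"
  proof -
    have "a + b + 1 > - real N" using a b N by simp
    then show ?thesis using N by (simp add: field_simps)
  qed
  then have "2 + (a + b + 1) / real N > 0" by simp
  then show ?thesis using True jacobi_gamma_pos[OF a b, of N] by (simp add: jacobi_gamma_tilde_def)
next
  case False then show ?thesis using jacobi_gamma_pos[OF a b, of n] by (simp add: jacobi_gamma_tilde_def)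
qed

lemma Gmat:
  fixes N :: nat and a b :: real and xs \<omega> :: "nat \<Rightarrow> real"
  assumes N: "N \<ge> 1" and a: "a > -1" and b: "b > -1"
    and zeros: "\<forall>i\<le>N. poly ([:1, 0, -1:] * pderiv (jacobi_poly a b N)) (xs i) = 0"
    and weights: "\<forall>p :: real poly. degree p \<le> 2 * N - 1 \<longrightarrow>
        integral {-1..1} (\<lambda>t. poly p t * (1 - t) powr a * (1 + t) powr b)
          = (\<Sum>j\<le>N. poly p (xs j) * \<omega> j)"
    and m: "m \<le> N" and n: "n \<le> N"
  shows "(\<Sum>i\<le>N. poly (jacobi_poly a b m * jacobi_poly a b n) (xs i) * \<omega> i)
          = (if m = n then jacobi_gamma_tilde a b N n else 0)"
proof (cases "m = N \<and> n = N")
  case True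
  then show ?thesis using quad_NN[OF N a b zeros weights] by (simp add: jacobi_gamma_tilde_def)
next
  case False
  have "degree (jacobi_poly a b m * jacobi_poly a b n) \<le> m + n"
    by (rule order.trans[OF degree_mult_le]) (intro add_mono degree_jac)
  also have "m + n \<le> 2 * N - 1" using False m n by auto
  finally have "(\<Sum>i\<le>N. poly (jacobi_poly a b m * jacobi_poly a b n) (xs i) * \<omega> i)
      = Iw a b (jacobi_poly a b m * jacobi_poly a b n)"
    using weights unfolding Iw_def by (metis (no_types))
  also have "\<dots> = (if m = n then jacobi_gamma_tilde a b N n else 0)"
    using False m n by (auto simp: jac_norm[OF a b] jac_orth[OF a b] jacobi_gamma_tilde_def)
  finally show ?thesis .
qed

lemma reproduce:
  fixes N :: nat and a b :: real and xs \<omega> :: "nat \<Rightarrow> real"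
  assumes N: "N \<ge> 1" and a: "a > -1" and b: "b > -1"
    and mono: "\<forall>i<N. xs i < xs (Suc i)"
    and zeros: "\<forall>i\<le>N. poly ([:1, 0, -1:] * pderiv (jacobi_poly a b N)) (xs i) = 0"
    and weights: "\<forall>p :: real poly. degree p \<le> 2 * N - 1 \<longrightarrow>
        integral {-1..1} (\<lambda>t. poly p t * (1 - t) powr a * (1 + t) powr b)
          = (\<Sum>j\<le>N. poly p (xs j) * \<omega> j)"
    and j: "j \<le> N" and i: "i \<le> N"
  shows "poly (\<Sum>n\<le>N. smult (\<omega> j / jacobi_gamma_tilde a b N n * poly (jacobi_poly a b n) (xs j)) (jacobi_poly a b n)) (xs i)
          = (if i = j then 1 else 0)"
proof -
  let ?S = "{..N} - {j}"
  define D where "D = (\<Prod>k\<in>?S. xs j - xs k)"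
  define LL where "LL = smult (1 / D) (\<Prod>k\<in>?S. [:- xs k, 1:])"
  have inj: "inj_on xs {..N}" by (rule nodes_inj[OF mono])
  have D0: "D \<noteq> 0" unfolding D_def
    using inj j by (auto simp: inj_on_def)
  have pl: "poly LL (xs i') = (if i' = j then 1 else 0)" if i': "i' \<le> N" for i'
  proof (cases "i' = j")
    case True then show ?thesis using D0 by (simp add: LL_def poly_prod D_def)
  next
    case False
    then have "i' \<in> ?S" using i' by simp
    then have "(\<Prod>k\<in>?S. poly [:- xs k, 1:] (xs i')) = 0"
      by (intro prod_zero bexI[of _ i']) simp_all
    then show ?thesis using False by (simp add: LL_def poly_prod)
  qed
  have dl: "degree LL \<le> N"
  proof -
    have "degree (\<Prod>k\<in>?S. [:- xs k, 1:]) \<le> sum (degree \<circ> (\<lambda>k. [:- xs k, 1:])) ?S"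
      by (rule degree_prod_sum_le) simp
    also have "\<dots> = card ?S" by simp
    also have "\<dots> = N" using j by simp
    finally show ?thesis unfolding LL_def by (rule order.trans[OF degree_smult_le])
  qed
  obtain c where c: "LL = (\<Sum>m\<le>N. smult (c m) (jacobi_poly a b m))"
    using basis_exists[OF a b dl] by blast
  have cn: "c n = \<omega> j / jacobi_gamma_tilde a b N n * poly (jacobi_poly a b n) (xs j)" if n: "n \<le> N" for n
  proof -
    have "(\<Sum>i\<le>N. poly (LL * jacobi_poly a b n) (xs i) * \<omega> i)
        = (\<Sum>i\<le>N. (if i = j then poly (jacobi_poly a b n) (xs j) * \<omega> j else 0))"
      by (intro sum.cong refl) (simp add: pl)
    also have "\<dots> = poly (jacobi_poly a b n) (xs j) * \<omega> j" using j by simp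
    finally have L: "(\<Sum>i\<le>N. poly (LL * jacobi_poly a b n) (xs i) * \<omega> i) = poly (jacobi_poly a b n) (xs j) * \<omega> j" .
    have "(\<Sum>i\<le>N. poly (LL * jacobi_poly a b n) (xs i) * \<omega> i)
        = (\<Sum>i\<le>N. \<Sum>m\<le>N. c m * (poly (jacobi_poly a b m * jacobi_poly a b n) (xs i) * \<omega> i))"
      unfolding c by (simp add: poly_sum sum_distrib_right sum_distrib_left mult_ac)
    also have "\<dots> = (\<Sum>m\<le>N. c m * (\<Sum>i\<le>N. poly (jacobi_poly a b m * jacobi_poly a b n) (xs i) * \<omega> i))"
      by (subst sum.swap) (simp add: sum_distrib_left)
    also have "\<dots> = (\<Sum>m\<le>N. c m * (if m = n then jacobi_gamma_tilde a b N n else 0))"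
    proof (intro sum.cong refl)
      fix m assume "m \<in> {..N}"
      then have mN: "m \<le> N" by simp
      show "c m * (\<Sum>i\<le>N. poly (jacobi_poly a b m * jacobi_poly a b n) (xs i) * \<omega> i)
          = c m * (if m = n then jacobi_gamma_tilde a b N n else 0)"
        by (simp only: Gmat[OF N a b zeros weights mN n])
    qed
    also have "\<dots> = c n * jacobi_gamma_tilde a b N n" using n by (simp add: if_distrib cong: if_cong)
    finally have "c n * jacobi_gamma_tilde a b N n = poly (jacobi_poly a b n) (xs j) * \<omega> j" using L by simp
    then show ?thesis using gtilde_pos[OF N a b, of n] by (simp add: field_simps)
  qed
  have "(\<Sum>n\<le>N. smult (\<omega> j / jacobi_gamma_tilde a b N n * poly (jacobi_poly a b n) (xs j)) (jacobi_poly a b n)) = LL"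
    unfolding c by (intro sum.cong refl) (simp add: cn)
  then show ?thesis using pl[OF i] by simp
qed


lemma sum_triangle:
  fixes f :: "nat \<Rightarrow> nat \<Rightarrow> 'a::comm_monoid_add"
  shows "(\<Sum>l\<le>N. \<Sum>n=l..N. f l n) = (\<Sum>n\<le>N. \<Sum>l\<le>n. f l n)"
proof -
  have A: "(\<Sum>n=l..N. f l n) = (\<Sum>n\<le>N. if l \<le> n then f l n else 0)" for l
  proof -
    have "(\<Sum>n\<le>N. if l \<le> n then f l n else 0) = sum (f l) {n\<in>{..N}. l \<le> n}"
      by (rule sum.inter_filter[symmetric]) simp
    also have "{n\<in>{..N}. l \<le> n} = {l..N}" by auto
    finally show ?thesis by simp
  qed
  have B: "(\<Sum>l\<le>n. f l n) = (\<Sum>l\<le>N. if l \<le> n then f l n else 0)" if "n \<le> N" for n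
  proof -
    have "(\<Sum>l\<le>N. if l \<le> n then f l n else 0) = sum (\<lambda>l. f l n) {l\<in>{..N}. l \<le> n}"
      by (rule sum.inter_filter[symmetric]) simp
    also have "{l\<in>{..N}. l \<le> n} = {..n}" using that by auto
    finally show ?thesis by simp
  qed
  have "(\<Sum>l\<le>N. \<Sum>n=l..N. f l n) = (\<Sum>l\<le>N. \<Sum>n\<le>N. if l \<le> n then f l n else 0)"
    by (simp add: A)
  also have "\<dots> = (\<Sum>n\<le>N. \<Sum>l\<le>N. if l \<le> n then f l n else 0)" by (rule sum.swap)
  also have "\<dots> = (\<Sum>n\<le>N. \<Sum>l\<le>n. f l n)"
    by (rule sum.cong[OF refl]) (simp add: B)
  finally show ?thesis .
qed

theorem theorem5p2:
  fixes N :: nat and \<alpha> \<beta> \<mu> :: real and xs \<omega> :: "nat \<Rightarrow> real" and Q :: "nat \<Rightarrow> real poly"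
  assumes N: "N \<ge> 1"
    and \<alpha>: "\<alpha> > -1" and \<beta>: "\<beta> > -1" and \<mu>: "0 < \<mu>" "\<mu> < 1"
    and nodes_mono: "\<forall>i<N. xs i < xs (Suc i)"
    and nodes_ends: "xs 0 = -1" "xs N = 1"
    and nodes_zeros: "{t. poly ([:1, 0, -1:] * pderiv (jacobi_poly \<alpha> \<beta> N)) t = 0} = xs ` {0..N}"
    and weights: "\<forall>p :: real poly. degree p \<le> 2 * N - 1 \<longrightarrow>
        integral {-1..1} (\<lambda>t. poly p t * (1 - t) powr \<alpha> * (1 + t) powr \<beta>)
          = (\<Sum>j\<le>N. poly p (xs j) * \<omega> j)"
    and Q_deg: "\<forall>j\<le>N. degree (Q j) \<le> N"
    and Q0: "\<forall>i\<in>{1..N}. rl_hat_deriv \<mu> (poly (Q 0)) (xs i) = 0" "poly (Q 0) (-1) = 1"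
    and Qj: "\<forall>j\<in>{1..N}. (\<forall>i\<in>{1..N}. rl_hat_deriv \<mu> (poly (Q j)) (xs i) = (if i = j then 1 else 0))
                          \<and> poly (Q j) (-1) = 0"
  shows "\<forall>j\<le>N. \<forall>x. poly (Q j) x =
           (if j = 0 then 1 / Gamma (1 - \<mu>) else 1) *
           (\<Sum>l\<le>N. Gamma (real l - \<mu> + 1) / fact l *
              (\<Sum>n=l..N. conn_coeff \<alpha> \<beta> \<mu> (- \<mu>) l n *
                   (\<omega> j / jacobi_gamma_tilde \<alpha> \<beta> N n * poly (jacobi_poly \<alpha> \<beta> n) (xs j)))
              * poly (jacobi_poly 0 0 l) x)"
proof (intro allI impI)
  fix j x assume j: "j \<le> N"
  have m1: "\<mu> > -1" "- \<mu> > -1" using \<mu> by auto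
  have zeros: "\<forall>i\<le>N. poly ([:1, 0, -1:] * pderiv (jacobi_poly \<alpha> \<beta> N)) (xs i) = 0"
  proof (intro allI impI)
    fix i assume "i \<le> N"
    then have "xs i \<in> xs ` {0..N}" by simp
    then show "poly ([:1, 0, -1:] * pderiv (jacobi_poly \<alpha> \<beta> N)) (xs i) = 0"
      unfolding nodes_zeros[symmetric] by simp
  qed
  define \<zeta> where "\<zeta> = (if j = 0 then 1 / Gamma (1 - \<mu>) else 1)"
  define t where "t n = \<omega> j / jacobi_gamma_tilde \<alpha> \<beta> N n * poly (jacobi_poly \<alpha> \<beta> n) (xs j)" for n
  define That where "That l = (\<Sum>n=l..N. conn_coeff \<alpha> \<beta> \<mu> (- \<mu>) l n * t n)" for l
  define R where "R = smult \<zeta> (\<Sum>l\<le>N. smult (Gamma (real l - \<mu> + 1) / fact l * That l) (jacobi_poly 0 0 l))"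
  define h where "h = (\<Sum>n\<le>N. smult (t n) (jacobi_poly \<alpha> \<beta> n))"
  have hx: "poly h (xs i) = (if i = j then 1 else 0)" if "i \<le> N" for i
    unfolding h_def t_def by (rule reproduce[OF N \<alpha> \<beta> nodes_mono zeros weights j that])
  have LR: "Lop \<mu> R = smult \<zeta> h"
  proof -
    have "Lop \<mu> R = smult \<zeta> (\<Sum>l\<le>N. smult (Gamma (real l - \<mu> + 1) / fact l * That l) (Lop \<mu> (jacobi_poly 0 0 l)))"
      by (simp add: R_def Lop_smult Lop_sum)
    also have "\<dots> = smult \<zeta> (\<Sum>l\<le>N. smult (That l) (jacobi_poly \<mu> (- \<mu>) l))"
    proof (intro arg_cong[where f="smult \<zeta>"] sum.cong refl)
      fix l
      have e: "real l - \<mu> + 1 = real l + 1 - \<mu>" by simp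
      have g: "Gamma (real l + 1 - \<mu>) > 0" using \<mu> by (intro Gamma_real_pos) simp
      show "smult (Gamma (real l - \<mu> + 1) / fact l * That l) (Lop \<mu> (jacobi_poly 0 0 l))
          = smult (That l) (jacobi_poly \<mu> (- \<mu>) l)"
        unfolding Lop_legendre[OF \<mu>] e using g by simp
    qed
    also have "(\<Sum>l\<le>N. smult (That l) (jacobi_poly \<mu> (- \<mu>) l))
        = (\<Sum>l\<le>N. \<Sum>n=l..N. smult (conn_coeff \<alpha> \<beta> \<mu> (- \<mu>) l n * t n) (jacobi_poly \<mu> (- \<mu>) l))"
      by (simp add: That_def smult_sum)
    also have "\<dots> = (\<Sum>n\<le>N. \<Sum>l\<le>n. smult (conn_coeff \<alpha> \<beta> \<mu> (- \<mu>) l n * t n) (jacobi_poly \<mu> (- \<mu>) l))"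
      by (rule sum_triangle)
    also have "\<dots> = (\<Sum>n\<le>N. smult (t n) (\<Sum>l\<le>n. smult (conn_coeff \<alpha> \<beta> \<mu> (- \<mu>) l n) (jacobi_poly \<mu> (- \<mu>) l)))"
      by (simp add: smult_sum_right mult.commute)
    also have "\<dots> = h"
      unfolding h_def by (simp add: conn_coeff_expand[OF \<alpha> \<beta> m1, symmetric])
    finally show ?thesis .
  qed
  have dR: "degree R \<le> N"
    unfolding R_def
    by (rule order.trans[OF degree_smult_le], rule degree_sum_le)
       (auto intro!: order.trans[OF degree_smult_le] order.trans[OF degree_jac])
  define E where "E = Q j - R"
  have dE: "degree E \<le> N" unfolding E_def using Q_deg j dR by (intro degree_diff_le) auto
  have xs_gt: "xs i > -1" if "1 \<le> i" "i \<le> N" for i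
    using nodes_strict[OF nodes_mono, of 0 i] that nodes_ends by simp
  have roots: "poly (Lop \<mu> E) (xs i) = 0" if i: "i \<le> N" for i
  proof (cases "i = 0")
    case True
    have G: "Gamma (1 - \<mu>) > 0" using \<mu> by simp
    have "poly (Lop \<mu> R) (-1) = poly R (-1) / Gamma (1 - \<mu>)" by (rule poly_Lop_m1[OF \<mu>(2)])
    moreover have "poly (Lop \<mu> R) (-1) = \<zeta> * (if j = 0 then 1 else 0)"
      using hx[of 0] nodes_ends by (simp add: LR)
    ultimately have "poly R (-1) = Gamma (1 - \<mu>) * \<zeta> * (if j = 0 then 1 else 0)" using G
      by (simp add: field_simps)
    then have "poly R (-1) = poly (Q j) (-1)"
      using G Q0 Qj j by (cases "j = 0") (auto simp: \<zeta>_def)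
    then have "poly E (-1) = 0" by (simp add: E_def)
    then show ?thesis using True nodes_ends poly_Lop_m1[OF \<mu>(2), of E] by simp
  next
    case False
    then have i1: "i \<in> {1..N}" using i by simp
    have gt: "xs i > -1" using xs_gt i False by simp
    have "poly (Lop \<mu> E) (xs i) = rl_hat_deriv \<mu> (poly (Q j)) (xs i) - \<zeta> * poly h (xs i)"
      unfolding E_def Lop_diff using rl_hat_poly[OF \<mu> gt, of "Q j"] by (simp add: LR)
    also have "\<dots> = 0"
    proof (cases "j = 0")
      case True then show ?thesis using Q0 i1 hx[OF i] False by (simp add: \<zeta>_def)
    next
      case False
      then have "j \<in> {1..N}" using j by simp
      then show ?thesis using Qj i1 hx[OF i] by (simp add: \<zeta>_def)
    qed
    finally show ?thesis .
  qed
  have "Lop \<mu> E = 0"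
  proof (rule ccontr)
    assume nz: "Lop \<mu> E \<noteq> 0"
    have "xs ` {..N} \<subseteq> {y. poly (Lop \<mu> E) y = 0}" using roots by auto
    then have "card (xs ` {..N}) \<le> card {y. poly (Lop \<mu> E) y = 0}"
      by (intro card_mono poly_roots_finite nz)
    also have "\<dots> \<le> degree (Lop \<mu> E)" by (rule card_poly_roots_bound[OF nz])
    also have "\<dots> \<le> N" by (rule order.trans[OF degree_Lop dE])
    finally have "card (xs ` {..N}) \<le> N" .
    moreover have "card (xs ` {..N}) = Suc N"
      using card_image[OF nodes_inj[OF nodes_mono]] by simp
    ultimately show False by simp
  qed
  then have "E = 0" by (rule Lop_zero_imp[OF \<mu>(2)])
  then have "Q j = R" by (simp add: E_def)
  then show "poly (Q j) x =
           (if j = 0 then 1 / Gamma (1 - \<mu>) else 1) *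
           (\<Sum>l\<le>N. Gamma (real l - \<mu> + 1) / fact l *
              (\<Sum>n=l..N. conn_coeff \<alpha> \<beta> \<mu> (- \<mu>) l n *
                   (\<omega> j / jacobi_gamma_tilde \<alpha> \<beta> N n * poly (jacobi_poly \<alpha> \<beta> n) (xs j)))
              * poly (jacobi_poly 0 0 l) x)"
    by (simp only: R_def poly_smult poly_sum \<zeta>_def[symmetric] That_def t_def)
qed


end
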